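(* Let $n\ge2$, $R>0$ and $S_R:=\{x=(x',x_n): x'\in\mathbb{R}^{n-1},\ 0<x_n<2R\}$. For all $u\in C_c^\infty(S_R)$, all $s\ge 1$ and all $\gamma>1$, $$\int_{S_R}\frac{|\nabla u|}{d^{s-1}}\,dx\ \ge\ (s-1)\int_{S_R}\frac{|u|}{d^s}\,dx+\frac{C}{R^{s-1}}\int_{S_R}\frac{|u|}{d}\,X^\gamma\!\Big(\frac{d}{R}\Big)\,dx$$ holds with a constant $C\ge\gamma-1$. The last term is optimal in the sense that if $\gamma=1$ there is no positive constant $C$ such that this inequality holds for all $u\in C_c^\infty(S_R)$.
   Context: $d(x):=\operatorname{dist}(x,\mathbb{R}^n\setminus S_R)$, and $X(t):=(1-\log t)^{-1}$ for $t\in(0,1]$. *)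

theory Defs
  imports "HOL-Analysis.Analysis"
begin

text \<open>Points of R^n are written x = (x', x_n) with x' in R^(n-1) = real^'m and x_n real.\<close>

definition strip :: "real \<Rightarrow> ((real^'m) \<times> real) set" where
  "strip R = {x. 0 < snd x \<and> snd x < 2 * R}"

definition dS :: "real \<Rightarrow> (real^'m) \<times> real \<Rightarrow> real" where
  "dS R x = infdist x (- strip R)"

definition Xf :: "real \<Rightarrow> real" where
  "Xf t = 1 / (1 - ln t)"

definition grad :: "('a::euclidean_space \<Rightarrow> real) \<Rightarrow> 'a \<Rightarrow> 'a" where
  "grad f x = (\<Sum>b\<in>Basis. frechet_derivative f (at x) b *\<^sub>R b)"

fun Ck_on :: "nat \<Rightarrow> 'a::euclidean_space set \<Rightarrow> ('a \<Rightarrow> real) \<Rightarrow> bool" where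
  "Ck_on 0 U f = continuous_on U f"
| "Ck_on (Suc k) U f = (f differentiable_on U \<and>
      (\<forall>b\<in>Basis. Ck_on k U (\<lambda>x. frechet_derivative f (at x) b)))"

definition smooth_on :: "'a::euclidean_space set \<Rightarrow> ('a \<Rightarrow> real) \<Rightarrow> bool" where
  "smooth_on U f = (\<forall>k. Ck_on k U f)"

text \<open>C_c^infinity(S_R): smooth functions on R^n whose support is compact and contained in S_R
  (equivalently, compactly supported smooth functions on S_R extended by zero).\<close>
definition Cc_inf :: "real \<Rightarrow> ((real^'m) \<times> real \<Rightarrow> real) set" where
  "Cc_inf R = {u. smooth_on UNIV u \<and> compact (closure {x. u x \<noteq> 0})
                  \<and> closure {x. u x \<noteq> 0} \<subseteq> strip R}"

definition ineqD :: "real \<Rightarrow> real \<Rightarrow> real \<Rightarrow> real \<Rightarrow> ((real^'m) \<times> real \<Rightarrow> real) \<Rightarrow> bool" where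
  "ineqD R s \<gamma> C u \<longleftrightarrow>
     integral (strip R) (\<lambda>x. norm (grad u x) / dS R x powr (s - 1))
     \<ge> (s - 1) * integral (strip R) (\<lambda>x. \<bar>u x\<bar> / dS R x powr s)
       + C / R powr (s - 1) *
         integral (strip R) (\<lambda>x. \<bar>u x\<bar> / dS R x * Xf (dS R x / R) powr \<gamma>)"

end

theory Submission
  imports Defs "HOL-Real_Asymp.Real_Asymp"
begin


lemma Ck_mono: "Ck_on (Suc k) UNIV f \<Longrightarrow> Ck_on k UNIV f"
proof (induction k arbitrary: f)
  case 0
  then show ?case by (auto intro: differentiable_imp_continuous_on)
next
  case (Suc k)
  then show ?case by auto
qed

lemma pd_eq:
  assumes "\<And>x. (f has_derivative f' x) (at x)"
  shows "(\<lambda>x. frechet_derivative f (at x) b) = (\<lambda>x. f' x b)"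
  using assms frechet_derivative_at by metis

lemma diff_on_UNIV: "f differentiable_on UNIV \<Longrightarrow> (f has_derivative frechet_derivative f (at x)) (at x)"
  by (simp add: differentiable_on_def frechet_derivative_works)

lemma Ck_const: "Ck_on k UNIV (\<lambda>x. c)"
proof (induction k arbitrary: c)
  case 0 then show ?case by simp
next
  case (Suc k)
  have "(\<lambda>x. frechet_derivative (\<lambda>x. c) (at x) b) = (\<lambda>x. 0)" for b :: 'a
    by (rule pd_eq[of _ "\<lambda>x h. 0", simplified]) simp
  then show ?case using Suc by simp
qed

lemma Ck_add: "Ck_on k UNIV f \<Longrightarrow> Ck_on k UNIV g \<Longrightarrow> Ck_on k UNIV (\<lambda>x. f x + g x)"
proof (induction k arbitrary: f g)
  case 0 then show ?case by (simp add: continuous_on_add)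
next
  case (Suc k)
  have df: "f differentiable_on UNIV" and dg: "g differentiable_on UNIV" using Suc.prems by auto
  have e: "(\<lambda>x. frechet_derivative (\<lambda>x. f x + g x) (at x) b) =
     (\<lambda>x. frechet_derivative f (at x) b + frechet_derivative g (at x) b)" for b
    by (rule pd_eq) (intro has_derivative_add diff_on_UNIV df dg)
  show ?case using Suc df dg by (auto simp: e intro!: differentiable_on_add)
qed

lemma Ck_mult: "Ck_on k UNIV f \<Longrightarrow> Ck_on k UNIV g \<Longrightarrow> Ck_on k UNIV (\<lambda>x. f x * g x)"
proof (induction k arbitrary: f g)
  case 0 then show ?case by (simp add: continuous_on_mult)
next
  case (Suc k)
  have df: "f differentiable_on UNIV" and dg: "g differentiable_on UNIV" using Suc.prems by auto
  have e: "(\<lambda>x. frechet_derivative (\<lambda>x. f x * g x) (at x) b) =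
     (\<lambda>x. f x * frechet_derivative g (at x) b + frechet_derivative f (at x) b * g x)" for b
    by (rule pd_eq) (intro has_derivative_mult diff_on_UNIV df dg)
  have fk: "Ck_on k UNIV f" "Ck_on k UNIV g" using Ck_mono Suc.prems by blast+
  show ?case using Suc.prems fk
    by (auto simp: e intro!: differentiable_on_mult Ck_add Suc.IH)
qed

lemma Ck_inverse: "Ck_on k UNIV f \<Longrightarrow> (\<And>x. f x \<noteq> 0) \<Longrightarrow> Ck_on k UNIV (\<lambda>x. 1 / f x)"
proof (induction k arbitrary: f)
  case 0 then show ?case by (auto intro!: continuous_on_divide continuous_intros)
next
  case (Suc k)
  have df: "f differentiable_on UNIV" using Suc.prems by auto
  have e: "(\<lambda>x. frechet_derivative (\<lambda>x. 1 / f x) (at x) b) =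
     (\<lambda>x. (- 1) * (frechet_derivative f (at x) b * ((1 / f x) * (1 / f x))))" for b
    apply (rule pd_eq)
    apply (rule has_derivative_eq_rhs)
     apply (rule has_derivative_divide[OF has_derivative_const diff_on_UNIV[OF df]])
    using Suc.prems(2) apply simp
    using Suc.prems(2) by (auto simp: field_simps power2_eq_square)
  have fk: "Ck_on k UNIV f" using Ck_mono Suc.prems by blast
  have dinv: "(\<lambda>x. 1 / f x) differentiable_on UNIV"
    using df Suc.prems(2) unfolding differentiable_on_def
    by (auto intro!: differentiable_divide)
  have IH: "Ck_on k UNIV (\<lambda>x. 1 / f x)" by (rule Suc.IH[OF fk Suc.prems(2)])
  show ?case unfolding Ck_on.simps e
  proof (intro conjI ballI dinv)
    fix b :: 'a assume "b \<in> Basis"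
    then have "Ck_on k UNIV (\<lambda>x. frechet_derivative f (at x) b)" using Suc.prems(1) by simp
    then show "Ck_on k UNIV (\<lambda>x. (- 1) * (frechet_derivative f (at x) b * ((1 / f x) * (1 / f x))))"
      by (intro Ck_mult Ck_const IH)
  qed
qed

lemma Ck_compose:
  fixes h :: "real \<Rightarrow> real" and f :: "'a::euclidean_space \<Rightarrow> real"
  shows "Ck_on k UNIV h \<Longrightarrow> Ck_on k UNIV f \<Longrightarrow> Ck_on k UNIV (\<lambda>x. h (f x))"
proof (induction k arbitrary: h f)
  case 0
  then have c: "continuous_on UNIV f" "continuous_on UNIV h" by simp_all
  then have "continuous_on (range f) h" using continuous_on_subset by blast
  then have "continuous_on UNIV (h o f)" by (rule continuous_on_compose[OF c(1)])
  then show ?case by (simp add: o_def)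
next
  case (Suc k)
  have dh: "h differentiable_on UNIV" and df: "f differentiable_on UNIV" using Suc.prems by auto
  have e: "(\<lambda>x. frechet_derivative (\<lambda>x. h (f x)) (at x) b) =
     (\<lambda>x. frechet_derivative h (at (f x)) 1 * frechet_derivative f (at x) b)" for b
  proof (rule pd_eq)
    fix x
    have lin: "linear (frechet_derivative h (at (f x)))"
      using diff_on_UNIV[OF dh] has_derivative_linear by blast
    have r: "frechet_derivative h (at (f x)) c = frechet_derivative h (at (f x)) 1 * c" for c
      using linear_cmul[OF lin, of c 1] by (simp add: mult.commute)
    have "((h o f) has_derivative (frechet_derivative h (at (f x)) o frechet_derivative f (at x))) (at x)"
      by (rule diff_chain_at[OF diff_on_UNIV[OF df] diff_on_UNIV[OF dh]])
    moreover have "(frechet_derivative h (at (f x)) o frechet_derivative f (at x)) =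
       (\<lambda>b. frechet_derivative h (at (f x)) 1 * frechet_derivative f (at x) b)"
    proof (rule ext)
      fix b
      show "(frechet_derivative h (at (f x)) o frechet_derivative f (at x)) b =
         frechet_derivative h (at (f x)) 1 * frechet_derivative f (at x) b"
        unfolding o_def by (rule r)
    qed
    ultimately show "((\<lambda>x. h (f x)) has_derivative (\<lambda>b. frechet_derivative h (at (f x)) 1 * frechet_derivative f (at x) b)) (at x)"
      by (simp add: o_def)
  qed
  have hk: "Ck_on k UNIV h" "Ck_on k UNIV f" using Ck_mono[OF Suc.prems(1)] Ck_mono[OF Suc.prems(2)] by auto
  have "\<forall>b\<in>Basis. Ck_on k UNIV (\<lambda>x. frechet_derivative h (at x) b)"
    using Suc.prems(1) unfolding Ck_on.simps by (rule conjunct2)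
  moreover have one: "(1::real) \<in> Basis" by simp
  ultimately have h1: "Ck_on k UNIV (\<lambda>y. frechet_derivative h (at y) 1)"
    by (rule bspec)
  have dc: "(\<lambda>x. h (f x)) differentiable_on UNIV"
  proof -
    have "(h o f) differentiable (at x)" for x
      by (rule differentiable_chain_at) (use df dh in \<open>simp_all add: differentiable_on_def\<close>)
    then show ?thesis unfolding differentiable_on_def o_def by simp
  qed
  have IH: "Ck_on k UNIV (\<lambda>x. frechet_derivative h (at (f x)) 1)" by (rule Suc.IH[OF h1 hk(2)])
  show ?case unfolding Ck_on.simps e
  proof (intro conjI ballI dc)
    fix b :: 'a assume "b \<in> Basis"
    then have "Ck_on k UNIV (\<lambda>x. frechet_derivative f (at x) b)"
      using Suc.prems(2) unfolding Ck_on.simps by blast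
    then show "Ck_on k UNIV (\<lambda>x. frechet_derivative h (at (f x)) 1 * frechet_derivative f (at x) b)"
      by (intro Ck_mult IH)
  qed
qed

lemma Ck_inner: "Ck_on k UNIV (\<lambda>x. x \<bullet> c)"
proof (induction k)
  case 0 then show ?case by (auto intro!: continuous_intros)
next
  case (Suc k)
  have e: "(\<lambda>x. frechet_derivative (\<lambda>x. x \<bullet> c) (at x) b) = (\<lambda>x. b \<bullet> c)" for b
    by (rule pd_eq) (auto intro!: derivative_eq_intros)
  have "((\<lambda>x. x \<bullet> c) has_derivative (\<lambda>h. h \<bullet> c)) (at x)" for x
    by (auto intro!: derivative_eq_intros)
  then have "(\<lambda>x. x \<bullet> c) differentiable_on UNIV"
    unfolding differentiable_on_def differentiable_def by blast
  then show ?case by (simp add: e Ck_const)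
qed


lemma Ck1_Suc:
  fixes h h' :: "real \<Rightarrow> real"
  assumes d: "\<And>x. (h has_real_derivative h' x) (at x)" and c: "Ck_on k UNIV h'"
  shows "Ck_on (Suc k) UNIV h"
proof -
  have e: "(\<lambda>x. frechet_derivative h (at x) 1) = h'"
  proof
    fix x
    have "(h has_derivative (\<lambda>c. h' x * c)) (at x)" using d[of x] by (simp add: has_field_derivative_def)
    then have "frechet_derivative h (at x) = (\<lambda>c. h' x * c)" by (metis frechet_derivative_at)
    then show "frechet_derivative h (at x) 1 = h' x" by simp
  qed
  have "h differentiable_on UNIV"
    unfolding differentiable_on_def using d real_differentiable_def by blast
  then show ?thesis using c by (simp add: Basis_real_def e)
qed

definition gexp :: "nat \<Rightarrow> real \<Rightarrow> real" where
  "gexp n t = (if 0 < t then exp (- 1 / t) / t ^ n else 0)"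

lemma gexp_lim0: "(gexp n \<longlongrightarrow> 0) (at 0)"
proof -
  have r: "((\<lambda>t. exp (- 1 / t) / t ^ n) \<longlongrightarrow> 0) (at_right (0::real))" by real_asymp
  have R: "(gexp n \<longlongrightarrow> 0) (at_right 0)"
    apply (rule Lim_transform_eventually[OF r])
    apply (rule eventually_at_rightI[of 0 1]) by (auto simp: gexp_def)
  have L: "(gexp n \<longlongrightarrow> 0) (at_left 0)"
    apply (rule Lim_transform_eventually[OF tendsto_const[of 0]])
    apply (rule eventually_at_leftI[of "-1"]) by (auto simp: gexp_def)
  show ?thesis using L R by (simp add: filterlim_at_split)
qed

lemma gexp_pos_deriv: "t > (0::real) \<Longrightarrow> ((\<lambda>t. exp (- 1 / t) / t ^ n) has_real_derivative
     (exp (- 1 / t) / t ^ (n+2) - real n * (exp (- 1 / t) / t ^ (n+1)))) (at t)"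
proof -
  assume t: "t > 0"
  have a: "((\<lambda>t. - 1 / t) has_real_derivative 1 / t^2) (at t)"
    using DERIV_inverse[of t] t by (auto simp: divide_inverse power2_eq_square intro!: derivative_eq_intros)
  have b: "((\<lambda>t. exp (- 1 / t)) has_real_derivative exp (- 1 / t) * (1 / t^2)) (at t)"
    by (rule DERIV_chain2[OF DERIV_exp a])
  have c: "((\<lambda>t. t ^ n) has_real_derivative real n * t ^ (n - Suc 0)) (at t)" by (rule DERIV_pow)
  have q: "((\<lambda>t. exp (- 1 / t) / t ^ n) has_real_derivative
    ((exp (- 1 / t) * (1 / t^2)) * t^n - real n * t ^ (n - Suc 0) * exp (- 1 / t)) / (t^n) ^ Suc (Suc 0)) (at t)"
    by (rule DERIV_quotient[OF b c]) (use t in simp)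
  have "((exp (- 1 / t) * (1 / t^2)) * t^n - real n * t ^ (n - Suc 0) * exp (- 1 / t)) / (t^n) ^ Suc (Suc 0)
     = exp (- 1 / t) / t ^ (n+2) - real n * (exp (- 1 / t) / t ^ (n+1))"
    using t by (cases n) (simp_all add: field_simps power2_eq_square)
  with q show ?thesis by simp
qed

lemma gexp_deriv: "(gexp n has_real_derivative (gexp (n+2) t - real n * gexp (n+1) t)) (at t)"
proof (cases "t > 0")
  case True
  note d = gexp_pos_deriv[OF True, of n]
  have v: "gexp (n+2) t - real n * gexp (n+1) t = exp (-1/t) / t^(n+2) - real n * (exp (-1/t) / t^(n+1))"
    using True by (simp add: gexp_def)
  show ?thesis unfolding v
    by (rule has_field_derivative_transform_within_open[OF d, of "{0<..}"]) (use True in \<open>auto simp: gexp_def\<close>)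
next
  case False
  show ?thesis
  proof (cases "t < 0")
    case True
    have d: "((\<lambda>t. 0) has_real_derivative 0) (at t)" by simp
    have v: "gexp (n+2) t - real n * gexp (n+1) t = 0"
      using True by (simp add: gexp_def)
    show ?thesis unfolding v
      by (rule has_field_derivative_transform_within_open[OF d, of "{..<0}"]) (use True in \<open>auto simp: gexp_def\<close>)
  next
    case False
    then have t: "t = 0" using \<open>\<not> t > 0\<close> by simp
    have "((\<lambda>y. (gexp n y - gexp n 0) / (y - 0)) \<longlongrightarrow> 0) (at 0)"
      apply (rule Lim_transform_eventually[OF gexp_lim0[of "n+1"]])
      by (auto simp: gexp_def eventually_at_filter)
    then have "(gexp n has_real_derivative 0) (at 0)"
      using has_field_derivative_iff by blast
    then show ?thesis using t by (simp add: gexp_def)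
  qed
qed

lemma Ck_gexp: "Ck_on k UNIV (gexp n)"
proof (induction k arbitrary: n)
  case 0
  have "isCont (gexp n) x" for x using gexp_deriv DERIV_isCont by blast
  then show ?case by (simp add: continuous_at_imp_continuous_on)
next
  case (Suc k)
  have "Ck_on k UNIV (\<lambda>t. gexp (n+2) t + (- real n) * gexp (n+1) t)"
    by (intro Ck_add Ck_mult Ck_const Suc.IH)
  then show ?case by (intro Ck1_Suc[OF gexp_deriv]) simp
qed


lemma gexp_nonneg: "gexp n t \<ge> 0" by (simp add: gexp_def)
lemma gexp_pos: "t > 0 \<Longrightarrow> gexp n t > 0" by (simp add: gexp_def)
lemma gexp_zero: "t \<le> 0 \<Longrightarrow> gexp n t = 0" by (simp add: gexp_def)

definition Hs :: "real \<Rightarrow> real" where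
  "Hs t = gexp 0 t / (gexp 0 t + gexp 0 (1 - t))"

definition Hd :: "real \<Rightarrow> real" where
  "Hd t = (gexp 2 t * gexp 0 (1 - t) + gexp 0 t * gexp 2 (1 - t)) / (gexp 0 t + gexp 0 (1 - t))^2"

lemma Hs_den_pos: "gexp 0 t + gexp 0 (1 - t) > 0"
proof (cases "t > 0")
  case True then show ?thesis using gexp_pos[of t 0] gexp_nonneg[of 0 "1-t"] by linarith
next
  case False then show ?thesis using gexp_pos[of "1-t" 0] gexp_nonneg[of 0 t] by linarith
qed

lemma Ck_Hs: "Ck_on k UNIV Hs"
proof -
  have l: "Ck_on k UNIV (\<lambda>t::real. 1 + t \<bullet> (-1))" by (rule Ck_add[OF Ck_const Ck_inner])
  have "Ck_on k UNIV (\<lambda>t::real. gexp 0 (1 + t \<bullet> (-1)))"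
    by (rule Ck_compose[where h="gexp 0", OF Ck_gexp l])
  then have c1: "Ck_on k UNIV (\<lambda>t::real. gexp 0 (1 - t))" by simp
  have den: "Ck_on k UNIV (\<lambda>t. gexp 0 t + gexp 0 (1 - t))" by (rule Ck_add[OF Ck_gexp c1])
  have inv: "Ck_on k UNIV (\<lambda>t. 1 / (gexp 0 t + gexp 0 (1 - t)))"
    by (rule Ck_inverse[OF den]) (use Hs_den_pos in \<open>metis less_irrefl\<close>)
  have "Ck_on k UNIV (\<lambda>t. gexp 0 t * (1 / (gexp 0 t + gexp 0 (1 - t))))"
    by (rule Ck_mult[OF Ck_gexp inv])
  then show ?thesis unfolding Hs_def by simp
qed

lemma gexp0_deriv: "(gexp 0 has_real_derivative gexp 2 t) (at t)"
    using gexp_deriv[of 0 t] by (simp only: add_0 of_nat_0 mult_zero_left diff_zero)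

lemma Hs_deriv: "(Hs has_real_derivative Hd t) (at t)"
proof -
  have d0: "(gexp 0 has_real_derivative gexp 2 t) (at t)"
    using gexp_deriv[of 0 t] by (simp only: add_0 of_nat_0 mult_zero_left diff_zero)
  have d1: "((\<lambda>t. gexp 0 (1 - t)) has_real_derivative gexp 2 (1 - t) * (-1)) (at t)"
    apply (rule DERIV_chain2[of "gexp 0"])
    using gexp0_deriv[of "1 - t"] apply simp
    by (auto intro!: derivative_eq_intros)
  have dd: "((\<lambda>t. gexp 0 t + gexp 0 (1 - t)) has_real_derivative gexp 2 t + gexp 2 (1 - t) * (-1)) (at t)"
    by (rule DERIV_add[OF d0 d1])
  have q: "(Hs has_real_derivative
     (gexp 2 t * (gexp 0 t + gexp 0 (1 - t)) - (gexp 2 t + gexp 2 (1 - t) * (-1)) * gexp 0 t)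
       / (gexp 0 t + gexp 0 (1 - t)) ^ Suc (Suc 0)) (at t)"
    unfolding Hs_def by (rule DERIV_quotient[OF d0 dd]) (use Hs_den_pos in \<open>metis less_irrefl\<close>)
  have "(gexp 2 t * (gexp 0 t + gexp 0 (1 - t)) - (gexp 2 t + gexp 2 (1 - t) * (-1)) * gexp 0 t)
       / (gexp 0 t + gexp 0 (1 - t)) ^ Suc (Suc 0) = Hd t"
    unfolding Hd_def by (simp add: algebra_simps power2_eq_square)
  with q show ?thesis by simp
qed

lemma Hd_nonneg: "Hd t \<ge> 0"
  unfolding Hd_def by (intro divide_nonneg_nonneg add_nonneg_nonneg mult_nonneg_nonneg gexp_nonneg) simp

lemma Hd_zero: "t \<le> 0 \<or> 1 \<le> t \<Longrightarrow> Hd t = 0"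
  unfolding Hd_def by (auto simp: gexp_zero)

lemma Hs_zero: "t \<le> 0 \<Longrightarrow> Hs t = 0" unfolding Hs_def by (simp add: gexp_zero)
lemma Hs_one: "1 \<le> t \<Longrightarrow> Hs t = 1"
  unfolding Hs_def using Hs_den_pos[of t] by (simp add: gexp_zero)
lemma Hs_nonneg: "Hs t \<ge> 0" unfolding Hs_def using Hs_den_pos[of t] gexp_nonneg by simp
lemma Hs_le1: "Hs t \<le> 1" unfolding Hs_def using Hs_den_pos[of t] gexp_nonneg[of 0 "1-t"] by simp

lemma Hd_cont: "continuous_on UNIV Hd"
proof -
  have c: "continuous_on UNIV (gexp n)" for n
    using Ck_gexp[of 0 n] by simp
  have c1: "continuous_on UNIV (\<lambda>t. gexp n (1 - t))" for n
    by (rule continuous_on_compose2[OF c[of n]]) (auto intro!: continuous_intros)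
  show ?thesis unfolding Hd_def
    apply (intro continuous_on_divide continuous_on_add continuous_on_mult continuous_on_power c c1)
    using Hs_den_pos by (metis less_irrefl zero_less_power)
qed

lemma Hd_bounded: "\<exists>M\<ge>0. \<forall>t. Hd t \<le> M"
proof -
  have "compact (Hd ` {0..1})"
    by (rule compact_continuous_image[OF continuous_on_subset[OF Hd_cont]]) auto
  then obtain B where B: "\<forall>y\<in>Hd ` {0..1}. norm y \<le> B" using compact_imp_bounded bounded_iff by blast
  have "Hd t \<le> max B 0" for t
  proof (cases "t \<in> {0..1}")
    case True
    then have "Hd t \<in> Hd ` {0..1}" by blast
    then have "norm (Hd t) \<le> B" using B by blast
    then show ?thesis by simp
  next
    case False then show ?thesis using Hd_zero[of t] by auto
  qed
  then show ?thesis by (intro exI[of _ "max B 0"]) auto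
qed

lemma Hs_mono: "x \<le> y \<Longrightarrow> Hs x \<le> Hs y"
  using DERIV_nonneg_imp_nondecreasing[of x y Hs] Hs_deriv Hd_nonneg by blast


definition Vf :: "real \<Rightarrow> real \<Rightarrow> real \<Rightarrow> real \<Rightarrow> real" where
  "Vf R s g t = - (t powr (1 - s)) + R powr (1 - s) * Xf (t / R) powr (g - 1)"

definition Wf :: "real \<Rightarrow> real \<Rightarrow> real \<Rightarrow> real \<Rightarrow> real \<Rightarrow> real" where
  "Wf R s g C t = (s - 1) / t powr s + C / R powr (s - 1) * (Xf (t / R) powr g / t)"

lemma Xf_pos: "0 < t \<Longrightarrow> t \<le> 1 \<Longrightarrow> Xf t > 0"
proof -
  assume "0 < t" "t \<le> 1"
  then have "ln t \<le> 0" by simp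
  then show ?thesis unfolding Xf_def by simp
qed

lemma Xf_le1: "0 < t \<Longrightarrow> t \<le> 1 \<Longrightarrow> Xf t \<le> 1"
proof -
  assume "0 < t" "t \<le> 1"
  then have "ln t \<le> 0" by simp
  then show ?thesis unfolding Xf_def by simp
qed

lemma Xf_deriv:
  assumes R: "R > 0" and t: "0 < t" "t \<le> R"
  shows "((\<lambda>t. Xf (t / R)) has_real_derivative Xf (t / R) ^ 2 / t) (at t)"
proof -
  have tR: "t / R > 0" "t / R \<le> 1" using R t by auto
  have l: "((\<lambda>t. 1 - ln (t / R)) has_real_derivative - (1 / t)) (at t)"
  proof -
    have "((\<lambda>t. t / R) has_real_derivative 1 / R) (at t)"
      using R by (auto intro!: derivative_eq_intros)
    then have "((\<lambda>t. ln (t / R)) has_real_derivative (1 / (t / R)) * (1 / R)) (at t)"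
      by (rule DERIV_chain2[where f=ln and g="\<lambda>t. t/R", OF DERIV_ln_divide[OF tR(1)]])
    then have "((\<lambda>t. ln (t / R)) has_real_derivative 1 / t) (at t)" using R t by simp
    from DERIV_diff[OF DERIV_const[of 1] this] show ?thesis by simp
  qed
  have "ln (t / R) \<le> 0" using tR by simp
  then have nz: "1 - ln (t / R) \<noteq> 0" by simp
  have "((\<lambda>t. 1 / (1 - ln (t / R))) has_real_derivative
          (0 * (1 - ln (t / R)) - (- (1 / t)) * 1) / (1 - ln (t / R)) ^ Suc (Suc 0)) (at t)"
    by (rule DERIV_quotient[OF DERIV_const l nz])
  then show ?thesis unfolding Xf_def by (simp add: power2_eq_square field_simps)
qed

lemma Vf_deriv:
  assumes R: "R > 0" and t: "0 < t" "t \<le> R"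
  shows "((Vf R s g) has_real_derivative Wf R s g (g - 1) t) (at t)"
proof -
  define X where "X = Xf (t / R)"
  have Xp: "X > 0" unfolding X_def using Xf_pos[of "t/R"] R t by simp
  have d1: "((\<lambda>t. t powr (1 - s)) has_real_derivative (1 - s) * t powr (1 - s - 1)) (at t)"
    by (rule has_real_derivative_powr[OF t(1)])
  have d2: "((\<lambda>t. Xf (t / R) powr (g - 1)) has_real_derivative
      (g - 1) * X powr (g - 1 - of_nat 1) * (X ^ 2 / t)) (at t)"
    unfolding X_def by (rule DERIV_fun_powr[OF Xf_deriv[OF R t]]) (use Xp X_def in simp)
  have d: "((Vf R s g) has_real_derivative
     - ((1 - s) * t powr (1 - s - 1)) + R powr (1 - s) * ((g - 1) * X powr (g - 1 - of_nat 1) * (X ^ 2 / t))) (at t)"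
    unfolding Vf_def by (intro DERIV_add DERIV_minus DERIV_cmult d1 d2)
  have tp: "t powr s > 0" using t by simp
  have e1: "- ((1 - s) * t powr (1 - s - 1)) = (s - 1) / t powr s"
    using powr_minus_divide[of t s] tp by (simp add: field_simps)
  have e2: "X powr (g - 1 - of_nat 1) * X ^ 2 = X powr g"
  proof -
    have a: "X powr (g - 2) * X powr 2 = X powr (g - 2 + 2)" by (simp only: powr_add)
    have b: "X powr 2 = X ^ 2" using Xp by simp
    show ?thesis using a b by simp
  qed
  have e3: "R powr (1 - s) = 1 / R powr (s - 1)"
    using powr_minus_divide[of R "s - 1"] by simp
  have "- ((1 - s) * t powr (1 - s - 1)) + R powr (1 - s) * ((g - 1) * X powr (g - 1 - of_nat 1) * (X ^ 2 / t))
      = Wf R s g (g - 1) t"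
    unfolding Wf_def e1 e3 X_def[symmetric]
    using e2 by (simp add: field_simps)
  with d show ?thesis by simp
qed

lemma ibp_zero:
  fixes F V Fd W :: "real \<Rightarrow> real"
  assumes ab: "a \<le> b"
    and dF: "\<And>t. t \<in> {a..b} \<Longrightarrow> (F has_real_derivative Fd t) (at t within {a..b})"
    and dV: "\<And>t. t \<in> {a..b} \<Longrightarrow> (V has_real_derivative W t) (at t within {a..b})"
    and cFd: "continuous_on {a..b} Fd" and cW: "continuous_on {a..b} W"
    and cF: "continuous_on {a..b} F" and cV: "continuous_on {a..b} V"
    and bd: "F a * V a = F b * V b"
  shows "integral {a..b} (\<lambda>t. F t * W t) = - integral {a..b} (\<lambda>t. Fd t * V t)"
proof -
  have "((\<lambda>t. Fd t * V t + F t * W t) has_integral (F b * V b - F a * V a)) {a..b}"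
  proof (rule fundamental_theorem_of_calculus[OF ab])
    fix t assume t: "t \<in> {a..b}"
    have "((\<lambda>t. F t * V t) has_real_derivative Fd t * V t + F t * W t) (at t within {a..b})"
      using DERIV_mult[OF dF[OF t] dV[OF t]] by (simp add: mult.commute)
    then show "((\<lambda>t. F t * V t) has_vector_derivative Fd t * V t + F t * W t) (at t within {a..b})"
      by (simp add: has_real_derivative_iff_has_vector_derivative)
  qed
  then have "integral {a..b} (\<lambda>t. Fd t * V t + F t * W t) = 0" using bd by (simp add: integral_unique)
  moreover have "integral {a..b} (\<lambda>t. Fd t * V t + F t * W t)
     = integral {a..b} (\<lambda>t. Fd t * V t) + integral {a..b} (\<lambda>t. F t * W t)"
    by (intro integral_add integrable_continuous_interval continuous_on_mult cFd cV cF cW)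
  ultimately show ?thesis by linarith
qed


lemma Vf_R: "R > 0 \<Longrightarrow> Vf R s g R = 0"
  unfolding Vf_def Xf_def by simp

lemma Wf_nonneg: "R > 0 \<Longrightarrow> 0 < t \<Longrightarrow> t \<le> R \<Longrightarrow> s \<ge> 1 \<Longrightarrow> C \<ge> 0 \<Longrightarrow> Wf R s g C t \<ge> 0"
  unfolding Wf_def by (intro add_nonneg_nonneg mult_nonneg_nonneg divide_nonneg_nonneg) auto

lemma Vf_lower: "R > 0 \<Longrightarrow> - Vf R s g t \<le> t powr (1 - s)"
  unfolding Vf_def by simp

lemma Wf_cont: "R > 0 \<Longrightarrow> 0 < c \<Longrightarrow> continuous_on {c..R} (Wf R s g C)"
proof -
  assume R: "R > 0" and c: "0 < c"
  have "ln (t / R) \<le> 0" if "t \<in> {c..R}" for t using that R c by simp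
  then have ne: "1 - ln (t / R) \<noteq> 0" if "t \<in> {c..R}" for t using that by fastforce
  have xp: "Xf (t / R) \<noteq> 0" if "t \<in> {c..R}" for t using Xf_pos[of "t/R"] that R c by simp
  have cX: "continuous_on {c..R} (\<lambda>t. Xf (t / R))" unfolding Xf_def
    apply (intro continuous_intros)
    using R c ne by auto
  have tp: "t powr s \<noteq> 0" "t \<noteq> 0" if "t \<in> {c..R}" for t using that c by auto
  show ?thesis unfolding Wf_def
    apply (intro continuous_intros cX)
    using R c xp tp by auto
qed

lemma abs_le_F:
  fixes f f' :: "real \<Rightarrow> real"
  assumes df: "\<And>t. (f has_real_derivative f' t) (at t)" and cf': "continuous_on UNIV f'"
    and fc: "f c = 0" and t: "c \<le> t"
  shows "\<bar>f t\<bar> \<le> integral {c..t} (\<lambda>\<tau>. \<bar>f' \<tau>\<bar>)"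
proof -
  have "(f' has_integral (f t - f c)) {c..t}"
    apply (rule fundamental_theorem_of_calculus[OF t])
    using df by (simp add: has_real_derivative_iff_has_vector_derivative[symmetric] has_field_derivative_at_within)
  then have e: "f t = integral {c..t} f'" using fc by (simp add: integral_unique)
  have cc: "continuous_on {c..t} f'" by (rule continuous_on_subset[OF cf']) simp
  have "norm (integral {c..t} f') \<le> integral {c..t} (\<lambda>\<tau>. \<bar>f' \<tau>\<bar>)"
    by (rule integral_norm_bound_integral)
       (intro integrable_continuous_interval continuous_intros cc, intro integrable_continuous_interval continuous_intros cc, simp)
  then show ?thesis using e by simp
qed

lemma abs_le_F2:
  fixes f f' :: "real \<Rightarrow> real"
  assumes df: "\<And>t. (f has_real_derivative f' t) (at t)" and cf': "continuous_on UNIV f'"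
    and fd: "f d = 0" and t: "t \<le> d"
  shows "\<bar>f t\<bar> \<le> integral {t..d} (\<lambda>\<tau>. \<bar>f' \<tau>\<bar>)"
proof -
  have "(f' has_integral (f d - f t)) {t..d}"
    apply (rule fundamental_theorem_of_calculus[OF t])
    using df by (simp add: has_real_derivative_iff_has_vector_derivative[symmetric] has_field_derivative_at_within)
  then have e: "f t = - integral {t..d} f'" using fd by (simp add: integral_unique)
  have cc: "continuous_on {t..d} f'" by (rule continuous_on_subset[OF cf']) simp
  have "norm (integral {t..d} f') \<le> integral {t..d} (\<lambda>\<tau>. \<bar>f' \<tau>\<bar>)"
    by (rule integral_norm_bound_integral)
       (intro integrable_continuous_interval continuous_intros cc, intro integrable_continuous_interval continuous_intros cc, simp)
  then show ?thesis using e by simp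
qed

lemma half_left:
  fixes f f' :: "real \<Rightarrow> real"
  assumes R: "R > 0" and c: "0 < c" "c \<le> R" and s: "s \<ge> 1" and g: "g > 1"
    and df: "\<And>t. (f has_real_derivative f' t) (at t)" and cf': "continuous_on UNIV f'"
    and fc: "f c = 0"
  shows "integral {c..R} (\<lambda>t. \<bar>f t\<bar> * Wf R s g (g - 1) t) \<le> integral {c..R} (\<lambda>t. \<bar>f' t\<bar> * t powr (1 - s))"
proof -
  define F where "F t = integral {c..t} (\<lambda>\<tau>. \<bar>f' \<tau>\<bar>)" for t
  have cc: "continuous_on {c..R} f'" by (rule continuous_on_subset[OF cf']) simp
  have cabs: "continuous_on {c..R} (\<lambda>\<tau>. \<bar>f' \<tau>\<bar>)"
    by (intro continuous_intros cc)
  have dF: "(F has_real_derivative \<bar>f' t\<bar>) (at t within {c..R})" if "t \<in> {c..R}" for t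
    unfolding F_def has_real_derivative_iff_has_vector_derivative
    by (rule integral_has_vector_derivative[OF cabs that])
  have dV: "(Vf R s g has_real_derivative Wf R s g (g - 1) t) (at t within {c..R})" if "t \<in> {c..R}" for t
    using Vf_deriv[OF R, of t s g] that c by (simp add: has_field_derivative_at_within)
  have cF: "continuous_on {c..R} F" by (rule DERIV_continuous_on[OF dF])
  have cV: "continuous_on {c..R} (Vf R s g)" by (rule DERIV_continuous_on[OF dV])
  have cW: "continuous_on {c..R} (Wf R s g (g - 1))" by (rule Wf_cont[OF R c(1)])
  have bd: "F c * Vf R s g c = F R * Vf R s g R" using Vf_R[OF R] by (simp add: F_def)
  have ibp: "integral {c..R} (\<lambda>t. F t * Wf R s g (g - 1) t) = - integral {c..R} (\<lambda>t. \<bar>f' t\<bar> * Vf R s g t)"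
    by (rule ibp_zero[OF c(2) dF dV cabs cW cF cV bd])
  have cf: "continuous_on {c..R} f"
    by (rule DERIV_continuous_on[where D=f'], rule has_field_derivative_at_within[OF df])
  have i1: "integral {c..R} (\<lambda>t. \<bar>f t\<bar> * Wf R s g (g - 1) t) \<le> integral {c..R} (\<lambda>t. F t * Wf R s g (g - 1) t)"
  proof (rule integral_le)
    show "(\<lambda>t. \<bar>f t\<bar> * Wf R s g (g - 1) t) integrable_on {c..R}"
      by (intro integrable_continuous_interval continuous_intros cf cW)
    show "(\<lambda>t. F t * Wf R s g (g - 1) t) integrable_on {c..R}"
      by (intro integrable_continuous_interval continuous_intros cF cW)
    fix t assume t: "t \<in> {c..R}"
    have "\<bar>f t\<bar> \<le> F t" unfolding F_def by (rule abs_le_F[OF df cf' fc]) (use t in simp)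
    moreover have "Wf R s g (g - 1) t \<ge> 0" by (rule Wf_nonneg) (use R t c s g in auto)
    ultimately show "\<bar>f t\<bar> * Wf R s g (g - 1) t \<le> F t * Wf R s g (g - 1) t" by (rule mult_right_mono)
  qed
  have i2: "- integral {c..R} (\<lambda>t. \<bar>f' t\<bar> * Vf R s g t) \<le> integral {c..R} (\<lambda>t. \<bar>f' t\<bar> * t powr (1 - s))"
  proof -
    have "integral {c..R} (\<lambda>t. \<bar>f' t\<bar> * (- Vf R s g t)) \<le> integral {c..R} (\<lambda>t. \<bar>f' t\<bar> * t powr (1 - s))"
    proof (rule integral_le)
      show "(\<lambda>t. \<bar>f' t\<bar> * (- Vf R s g t)) integrable_on {c..R}"
        by (intro integrable_continuous_interval continuous_intros cabs cV)
      show "(\<lambda>t. \<bar>f' t\<bar> * t powr (1 - s)) integrable_on {c..R}"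
      proof -
        have cp: "continuous_on {c..R} (\<lambda>t. t powr (1 - s))"
          by (rule continuous_on_powr[OF continuous_on_id continuous_on_const]) (use c in auto)
        show ?thesis by (intro integrable_continuous_interval continuous_on_mult cabs cp)
      qed
      fix t assume t: "t \<in> {c..R}"
      show "\<bar>f' t\<bar> * (- Vf R s g t) \<le> \<bar>f' t\<bar> * t powr (1 - s)"
        by (rule mult_left_mono[OF Vf_lower[OF R]]) simp
    qed
    moreover have "integral {c..R} (\<lambda>t. \<bar>f' t\<bar> * (- Vf R s g t)) = - integral {c..R} (\<lambda>t. \<bar>f' t\<bar> * Vf R s g t)"
      by (simp only: mult_minus_right integral_neg)
    ultimately show ?thesis by simp
  qed
  show ?thesis using i1 i2 ibp by linarith
qed

lemma half_right:
  fixes f f' :: "real \<Rightarrow> real"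
  assumes R: "R > 0" and d: "R \<le> d" "d < 2 * R" and s: "s \<ge> 1" and g: "g > 1"
    and df: "\<And>t. (f has_real_derivative f' t) (at t)" and cf': "continuous_on UNIV f'"
    and fd: "f d = 0"
  shows "integral {R..d} (\<lambda>t. \<bar>f t\<bar> * Wf R s g (g - 1) (2 * R - t))
       \<le> integral {R..d} (\<lambda>t. \<bar>f' t\<bar> * (2 * R - t) powr (1 - s))"
proof -
  define K where "K = integral {R..d} (\<lambda>\<tau>. \<bar>f' \<tau>\<bar>)"
  define F where "F t = K - integral {R..t} (\<lambda>\<tau>. \<bar>f' \<tau>\<bar>)" for t
  define V where "V t = - Vf R s g (2 * R - t)" for t
  define W where "W t = Wf R s g (g - 1) (2 * R - t)" for t
  have cc: "continuous_on {R..d} f'" by (rule continuous_on_subset[OF cf']) simp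
  have cabs: "continuous_on {R..d} (\<lambda>\<tau>. \<bar>f' \<tau>\<bar>)"
    by (intro continuous_intros cc)
  have cabs': "continuous_on {R..d} (\<lambda>\<tau>. - \<bar>f' \<tau>\<bar>)"
    by (intro continuous_intros cc)
  have dF: "(F has_real_derivative - \<bar>f' t\<bar>) (at t within {R..d})" if "t \<in> {R..d}" for t
  proof -
    have "((\<lambda>t. integral {R..t} (\<lambda>\<tau>. \<bar>f' \<tau>\<bar>)) has_real_derivative \<bar>f' t\<bar>) (at t within {R..d})"
      unfolding has_real_derivative_iff_has_vector_derivative
      by (rule integral_has_vector_derivative[OF cabs that])
    from DERIV_diff[OF DERIV_const[of K] this] show ?thesis unfolding F_def by simp
  qed
  have dV: "(V has_real_derivative W t) (at t within {R..d})" if "t \<in> {R..d}" for t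
  proof -
    have t: "0 < 2 * R - t" "2 * R - t \<le> R" using that d by auto
    have "((\<lambda>t. Vf R s g (2 * R - t)) has_real_derivative Wf R s g (g - 1) (2 * R - t) * (-1)) (at t)"
      apply (rule DERIV_chain2[where f="Vf R s g" and g="\<lambda>t. 2 * R - t", OF Vf_deriv[OF R t]])
      by (auto intro!: derivative_eq_intros)
    from DERIV_minus[OF this] show ?thesis unfolding V_def W_def
      by (simp add: has_field_derivative_at_within)
  qed
  have cF: "continuous_on {R..d} F" by (rule DERIV_continuous_on[OF dF])
  have cV: "continuous_on {R..d} V" by (rule DERIV_continuous_on[OF dV])
  have cW: "continuous_on {R..d} W" unfolding W_def
    apply (rule continuous_on_compose2[OF Wf_cont[of R "2 * R - d"]])
    using R d by (auto intro!: continuous_intros)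
  have bd: "F R * V R = F d * V d" using Vf_R[OF R] by (simp add: F_def K_def V_def)
  have ibp: "integral {R..d} (\<lambda>t. F t * W t) = - integral {R..d} (\<lambda>t. - \<bar>f' t\<bar> * V t)"
    by (rule ibp_zero[OF d(1) dF dV cabs' cW cF cV bd])
  have cf: "continuous_on {R..d} f"
    by (rule DERIV_continuous_on[where D=f'], rule has_field_derivative_at_within[OF df])
  have i1: "integral {R..d} (\<lambda>t. \<bar>f t\<bar> * W t) \<le> integral {R..d} (\<lambda>t. F t * W t)"
  proof (rule integral_le)
    show "(\<lambda>t. \<bar>f t\<bar> * W t) integrable_on {R..d}"
      by (intro integrable_continuous_interval continuous_intros cf cW)
    show "(\<lambda>t. F t * W t) integrable_on {R..d}"
      by (intro integrable_continuous_interval continuous_intros cF cW)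
    fix t assume t: "t \<in> {R..d}"
    have "F t = integral {t..d} (\<lambda>\<tau>. \<bar>f' \<tau>\<bar>)"
    proof -
      have "integral {R..t} (\<lambda>\<tau>. \<bar>f' \<tau>\<bar>) + integral {t..d} (\<lambda>\<tau>. \<bar>f' \<tau>\<bar>) = K"
        unfolding K_def
        by (rule Henstock_Kurzweil_Integration.integral_combine)
           (use t in \<open>auto intro!: integrable_continuous_interval cabs\<close>)
      then show ?thesis unfolding F_def by simp
    qed
    moreover have "\<bar>f t\<bar> \<le> integral {t..d} (\<lambda>\<tau>. \<bar>f' \<tau>\<bar>)"
      by (rule abs_le_F2[OF df cf' fd]) (use t in simp)
    moreover have "W t \<ge> 0" unfolding W_def by (rule Wf_nonneg) (use R t d s g in auto)
    ultimately show "\<bar>f t\<bar> * W t \<le> F t * W t" by (simp add: mult_right_mono)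
  qed
  have i2: "- integral {R..d} (\<lambda>t. - \<bar>f' t\<bar> * V t) \<le> integral {R..d} (\<lambda>t. \<bar>f' t\<bar> * (2 * R - t) powr (1 - s))"
  proof -
    have "integral {R..d} (\<lambda>t. \<bar>f' t\<bar> * V t) \<le> integral {R..d} (\<lambda>t. \<bar>f' t\<bar> * (2 * R - t) powr (1 - s))"
    proof (rule integral_le)
      show "(\<lambda>t. \<bar>f' t\<bar> * V t) integrable_on {R..d}"
        by (intro integrable_continuous_interval continuous_on_mult cabs cV)
      show "(\<lambda>t. \<bar>f' t\<bar> * (2 * R - t) powr (1 - s)) integrable_on {R..d}"
      proof -
        have cp: "continuous_on {R..d} (\<lambda>t. (2 * R - t) powr (1 - s))"
          by (rule continuous_on_powr) (use d in \<open>auto intro!: continuous_intros\<close>)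
        show ?thesis by (intro integrable_continuous_interval continuous_on_mult cabs cp)
      qed
      fix t assume t: "t \<in> {R..d}"
      show "\<bar>f' t\<bar> * V t \<le> \<bar>f' t\<bar> * (2 * R - t) powr (1 - s)"
        unfolding V_def by (rule mult_left_mono[OF Vf_lower[OF R]]) simp
    qed
    moreover have "- integral {R..d} (\<lambda>t. - \<bar>f' t\<bar> * V t) = integral {R..d} (\<lambda>t. \<bar>f' t\<bar> * V t)"
      by (simp only: mult_minus_left integral_neg minus_minus)
    ultimately show ?thesis by simp
  qed
  show ?thesis using i1 i2 ibp unfolding W_def by linarith
qed


definition dl :: "real \<Rightarrow> real \<Rightarrow> real" where "dl R t = min t (2 * R - t)"

lemma dl_cont: "continuous_on S (dl R)"
  unfolding dl_def by (intro continuous_intros)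

lemma cont_dlpow:
  assumes "\<And>t. t \<in> S \<Longrightarrow> dl R t > 0"
  shows "continuous_on S (\<lambda>t. dl R t powr a)"
  by (rule continuous_on_powr[OF dl_cont continuous_on_const]) (use assms in force)

lemma cont_Xdl:
  assumes R: "R > 0" and p: "\<And>t. t \<in> S \<Longrightarrow> dl R t > 0" "\<And>t. t \<in> S \<Longrightarrow> dl R t \<le> R"
  shows "continuous_on S (\<lambda>t. Xf (dl R t / R) powr g)"
proof -
  have ln: "ln (dl R t / R) \<le> 0" if "t \<in> S" for t using p[OF that] R by simp
  have ne: "\<forall>t\<in>S. 1 - ln (dl R t / R) \<noteq> 0"
  proof
    fix t assume "t \<in> S" then show "1 - ln (dl R t / R) \<noteq> 0" using ln[of t] by linarith
  qed
  have ne2: "\<forall>t\<in>S. dl R t / R \<noteq> 0" using p R by force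
  have c: "continuous_on S (\<lambda>t. Xf (dl R t / R))"
  proof -
    have r: "\<forall>x\<in>S. R \<noteq> 0" using R by simp
    show ?thesis unfolding Xf_def by (intro continuous_intros dl_cont ne ne2 r)
  qed
  show ?thesis
    apply (rule continuous_on_powr[OF c continuous_on_const])
    using Xf_pos[of "dl R t / R" for t] p R by (simp add: less_imp_neq[symmetric] ) 
qed

lemma Q_eq:
  fixes t R a b s C X :: real
  assumes t: "t > 0" and R: "R > 0"
  shows "a / t powr (s - 1) - (s - 1) * (b / t powr s) - C / R powr (s - 1) * (b / t * X)
       = a * t powr (1 - s) - b * ((s - 1) / t powr s + C / R powr (s - 1) * (X / t))"
proof -
  have "t powr (1 - s) = 1 / t powr (s - 1)" using powr_minus_divide[of t "s - 1"] by simp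
  then show ?thesis by (simp add: field_simps)
qed

lemma F1D:
  fixes f f' G :: "real \<Rightarrow> real"
  assumes R: "R > 0" and c: "0 < c" "c \<le> R" and d: "R \<le> d" "d < 2 * R" and s: "s \<ge> 1" and g: "g > 1"
    and df: "\<And>t. (f has_real_derivative f' t) (at t)" and cf': "continuous_on UNIV f'"
    and fc: "f c = 0" and fd: "f d = 0"
    and cG: "continuous_on {c..d} G" and Gge: "\<And>t. t \<in> {c..d} \<Longrightarrow> \<bar>f' t\<bar> \<le> G t"
  shows "0 \<le> integral {c..d} (\<lambda>t. G t / dl R t powr (s - 1) - (s - 1) * (\<bar>f t\<bar> / dl R t powr s)
            - (g - 1) / R powr (s - 1) * (\<bar>f t\<bar> / dl R t * Xf (dl R t / R) powr g))"
proof -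
  have pos: "dl R t > 0" "dl R t \<le> R" if "t \<in> {c..d}" for t
    using that c d unfolding dl_def by auto
  define P where "P t = G t / dl R t powr (s - 1) - \<bar>f' t\<bar> / dl R t powr (s - 1)" for t
  define Q where "Q t = \<bar>f' t\<bar> / dl R t powr (s - 1) - (s - 1) * (\<bar>f t\<bar> / dl R t powr s)
            - (g - 1) / R powr (s - 1) * (\<bar>f t\<bar> / dl R t * Xf (dl R t / R) powr g)" for t
  have cc: "continuous_on {c..d} f'" by (rule continuous_on_subset[OF cf']) simp
  have cf: "continuous_on {c..d} f"
    by (rule DERIV_continuous_on[where D=f'], rule has_field_derivative_at_within[OF df])
  have c1: "continuous_on {c..d} (\<lambda>t. dl R t powr (s - 1))" by (rule cont_dlpow) (use pos in auto)
  have c2: "continuous_on {c..d} (\<lambda>t. dl R t powr s)" by (rule cont_dlpow) (use pos in auto)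
  have c3: "continuous_on {c..d} (\<lambda>t. Xf (dl R t / R) powr g)" by (rule cont_Xdl[OF R]) (use pos in auto)
  have c4: "continuous_on {c..d} (dl R)" by (rule dl_cont)
  have nz0: "\<forall>t\<in>{c..d}. dl R t \<noteq> 0" using pos(1) by (metis less_irrefl)
  then have nz: "\<forall>t\<in>{c..d}. dl R t powr (s - 1) \<noteq> 0" "\<forall>t\<in>{c..d}. dl R t powr s \<noteq> 0" "\<forall>t\<in>{c..d}. dl R t \<noteq> 0"
    by auto
  have cP: "continuous_on {c..d} P" unfolding P_def
    by (intro continuous_intros cG cc c1 nz)
  have cQ: "continuous_on {c..d} Q" unfolding Q_def
    by (intro continuous_intros cc cf c1 c2 c3 c4 nz)
  have iP: "P integrable_on {c..d}" by (rule integrable_continuous_interval[OF cP])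
  have iQ: "Q integrable_on {c..d}" by (rule integrable_continuous_interval[OF cQ])
  have e: "integral {c..d} (\<lambda>t. G t / dl R t powr (s - 1) - (s - 1) * (\<bar>f t\<bar> / dl R t powr s)
            - (g - 1) / R powr (s - 1) * (\<bar>f t\<bar> / dl R t * Xf (dl R t / R) powr g))
        = integral {c..d} (\<lambda>t. P t + Q t)"
    by (rule integral_cong) (simp add: P_def Q_def)
  have e2: "integral {c..d} (\<lambda>t. P t + Q t) = integral {c..d} P + integral {c..d} Q"
    by (rule integral_add[OF iP iQ])
  have Pn: "0 \<le> integral {c..d} P"
  proof (rule integral_nonneg[OF iP])
    fix t assume t: "t \<in> {c..d}"
    have "\<bar>f' t\<bar> / dl R t powr (s - 1) \<le> G t / dl R t powr (s - 1)"
      by (rule divide_right_mono[OF Gge[OF t]]) simp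
    then show "0 \<le> P t" unfolding P_def by simp
  qed
  have e3: "integral {c..R} Q + integral {R..d} Q = integral {c..d} Q"
    by (rule Henstock_Kurzweil_Integration.integral_combine[OF c(2) d(1) iQ])
  have ccR: "continuous_on {c..R} f'" by (rule continuous_on_subset[OF cf']) simp
  have cRd: "continuous_on {R..d} f'" by (rule continuous_on_subset[OF cf']) simp
  have cfR: "continuous_on {c..R} f" by (rule continuous_on_subset[OF cf]) (use d in auto)
  have cfd: "continuous_on {R..d} f" by (rule continuous_on_subset[OF cf]) (use c in auto)
  have L: "0 \<le> integral {c..R} Q"
  proof -
    have "integral {c..R} Q = integral {c..R} (\<lambda>t. \<bar>f' t\<bar> * t powr (1 - s) - \<bar>f t\<bar> * Wf R s g (g - 1) t)"
    proof (rule integral_cong)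
      fix t assume t: "t \<in> {c..R}"
      then have "dl R t = t" unfolding dl_def by auto
      then show "Q t = \<bar>f' t\<bar> * t powr (1 - s) - \<bar>f t\<bar> * Wf R s g (g - 1) t"
        unfolding Q_def Wf_def using Q_eq[of t R] t c R by simp
    qed
    also have "\<dots> = integral {c..R} (\<lambda>t. \<bar>f' t\<bar> * t powr (1 - s)) - integral {c..R} (\<lambda>t. \<bar>f t\<bar> * Wf R s g (g - 1) t)"
    proof (rule integral_diff)
      have cp: "continuous_on {c..R} (\<lambda>t. t powr (1 - s))"
        by (rule continuous_on_powr[OF continuous_on_id continuous_on_const]) (use c in auto)
      show "(\<lambda>t. \<bar>f' t\<bar> * t powr (1 - s)) integrable_on {c..R}"
        by (intro integrable_continuous_interval continuous_intros ccR cp)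
      show "(\<lambda>t. \<bar>f t\<bar> * Wf R s g (g - 1) t) integrable_on {c..R}"
        by (intro integrable_continuous_interval continuous_intros cfR Wf_cont[OF R c(1)])
    qed
    finally show ?thesis using half_left[OF R c s g df cf' fc] by linarith
  qed
  have Rr: "0 \<le> integral {R..d} Q"
  proof -
    have "integral {R..d} Q = integral {R..d} (\<lambda>t. \<bar>f' t\<bar> * (2 * R - t) powr (1 - s) - \<bar>f t\<bar> * Wf R s g (g - 1) (2 * R - t))"
    proof (rule integral_cong)
      fix t assume t: "t \<in> {R..d}"
      then have "dl R t = 2 * R - t" unfolding dl_def by auto
      moreover have "2 * R - t > 0" using t d by auto
      ultimately show "Q t = \<bar>f' t\<bar> * (2 * R - t) powr (1 - s) - \<bar>f t\<bar> * Wf R s g (g - 1) (2 * R - t)"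
        unfolding Q_def Wf_def using Q_eq[of "2 * R - t" R] R by simp
    qed
    also have "\<dots> = integral {R..d} (\<lambda>t. \<bar>f' t\<bar> * (2 * R - t) powr (1 - s)) - integral {R..d} (\<lambda>t. \<bar>f t\<bar> * Wf R s g (g - 1) (2 * R - t))"
    proof (rule integral_diff)
      have cp: "continuous_on {R..d} (\<lambda>t. (2 * R - t) powr (1 - s))"
        by (rule continuous_on_powr) (use d in \<open>auto intro!: continuous_intros\<close>)
      show "(\<lambda>t. \<bar>f' t\<bar> * (2 * R - t) powr (1 - s)) integrable_on {R..d}"
        by (intro integrable_continuous_interval continuous_intros cRd cp)
      have cW: "continuous_on {R..d} (\<lambda>t. Wf R s g (g - 1) (2 * R - t))"
        apply (rule continuous_on_compose2[OF Wf_cont[of R "2 * R - d"]])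
        using R d by (auto intro!: continuous_intros)
      show "(\<lambda>t. \<bar>f t\<bar> * Wf R s g (g - 1) (2 * R - t)) integrable_on {R..d}"
        by (intro integrable_continuous_interval continuous_intros cfd cW)
    qed
    finally show ?thesis using half_right[OF R d s g df cf' fd] by linarith
  qed
  show ?thesis using e e2 e3 Pn L Rr by linarith
qed


lemma infdist_geI: "A \<noteq> {} \<Longrightarrow> (\<And>a. a \<in> A \<Longrightarrow> e \<le> dist x a) \<Longrightarrow> e \<le> infdist x A"
  unfolding infdist_def by (auto intro: cINF_greatest)

lemma strip_iff: "x \<in> strip R \<longleftrightarrow> 0 < snd x \<and> snd x < 2 * R"
  unfolding strip_def by simp

lemma dS_eq:
  fixes x :: "(real^'m) \<times> real"
  assumes x: "x \<in> strip R"
  shows "dS R x = dl R (snd x)"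
proof (rule antisym)
  have y1: "(fst x, 0) \<in> - strip R" by (simp add: strip_iff)
  have y2: "(fst x, 2 * R) \<in> - strip R" by (simp add: strip_iff)
  have d1: "dist x (fst x, 0) = snd x"
  proof -
    have "dist x (fst x, 0) = sqrt ((dist (fst x) (fst x))\<^sup>2 + (dist (snd x) 0)\<^sup>2)"
      using dist_Pair_Pair[of "fst x" "snd x" "fst x" 0] by simp
    also have "\<dots> = \<bar>snd x\<bar>" by (simp add: dist_real_def)
    finally show ?thesis using x by (simp add: strip_iff)
  qed
  have d2: "dist x (fst x, 2 * R) = 2 * R - snd x"
  proof -
    have "dist x (fst x, 2 * R) = sqrt ((dist (fst x) (fst x))\<^sup>2 + (dist (snd x) (2 * R))\<^sup>2)"
      using dist_Pair_Pair[of "fst x" "snd x" "fst x" "2 * R"] by simp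
    also have "\<dots> = \<bar>snd x - 2 * R\<bar>" by (simp add: dist_real_def)
    finally show ?thesis using x by (simp add: strip_iff)
  qed
  show "dS R x \<le> dl R (snd x)"
    unfolding dS_def dl_def
    by (rule min.boundedI) (use infdist_le[OF y1, of x] infdist_le[OF y2, of x] d1 d2 in simp_all)
  show "dl R (snd x) \<le> dS R x"
    unfolding dS_def
  proof (rule infdist_geI)
    show "- strip R \<noteq> ({} :: ((real^'m) \<times> real) set)" by (metis empty_iff y1)
    fix a :: "(real^'m) \<times> real" assume a: "a \<in> - strip R"
    have "dist (snd x) (snd a) \<le> dist x a" by (rule dist_snd_le)
    moreover have sa: "snd a \<le> 0 \<or> snd a \<ge> 2 * R" using a unfolding ComplI Compl_iff strip_iff by linarith
    moreover have "0 < snd x" "snd x < 2 * R" using x by (simp_all add: strip_iff)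
    ultimately have "dl R (snd x) \<le> dist (snd x) (snd a)"
      unfolding dl_def dist_real_def
    proof (elim disjE)
      assume "snd a \<le> 0" "0 < snd x"
      then show "min (snd x) (2 * R - snd x) \<le> \<bar>snd x - snd a\<bar>" by (intro min.coboundedI1) simp
    next
      assume "snd a \<ge> 2 * R" "snd x < 2 * R"
      then show "min (snd x) (2 * R - snd x) \<le> \<bar>snd x - snd a\<bar>" by (intro min.coboundedI2) simp
    qed
    then show "dl R (snd x) \<le> dist x a" using dist_snd_le[of x a] by linarith
  qed
qed

lemma cont_dS: "continuous_on S (dS R)"
  unfolding dS_def by (intro continuous_intros)

lemma cont_Xh:
  assumes R: "R > 0" and ch: "continuous_on S h" and p: "\<And>t. t \<in> S \<Longrightarrow> h t > 0" "\<And>t. t \<in> S \<Longrightarrow> h t \<le> R"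
  shows "continuous_on S (\<lambda>t. Xf (h t / R) powr g)"
proof -
  have ln: "ln (h t / R) \<le> 0" if "t \<in> S" for t using p[OF that] R by simp
  have ne: "\<forall>t\<in>S. 1 - ln (h t / R) \<noteq> 0"
  proof
    fix t assume "t \<in> S" then show "1 - ln (h t / R) \<noteq> 0" using ln[of t] by linarith
  qed
  have ne2: "\<forall>t\<in>S. h t / R \<noteq> 0" using p R by force
  have r: "\<forall>x\<in>S. R \<noteq> 0" using R by simp
  have c: "continuous_on S (\<lambda>t. Xf (h t / R))"
    unfolding Xf_def by (intro continuous_intros ch ne ne2 r)
  show ?thesis
    apply (rule continuous_on_powr[OF c continuous_on_const])
    using Xf_pos[of "h t / R" for t] p R by (simp add: less_imp_neq[symmetric])
qed


lemma grad_inner_basis: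
  assumes "b' \<in> Basis"
  shows "grad f x \<bullet> b' = frechet_derivative f (at x) b'"
  using assms unfolding grad_def
  by (simp add: inner_sum_left inner_Basis if_distrib cong: if_cong)

lemma grad_zero_open:
  assumes "open S" "x \<in> S" "\<And>y. y \<in> S \<Longrightarrow> f y = 0"
  shows "grad f x = 0"
proof -
  have "((\<lambda>y. 0) has_derivative (\<lambda>h. 0)) (at x)" by simp
  then have "(f has_derivative (\<lambda>h. 0)) (at x)"
    by (rule has_derivative_transform_within_open[OF _ assms(1,2)]) (use assms(3) in simp)
  then have "frechet_derivative f (at x) = (\<lambda>h. 0)" by (metis frechet_derivative_at)
  then show ?thesis unfolding grad_def by simp
qed

lemma grad_cont:
  assumes "Ck_on (Suc 0) UNIV f"
  shows "continuous_on UNIV (grad f)"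
proof -
  have "continuous_on UNIV (\<lambda>x. frechet_derivative f (at x) b)" if "b \<in> Basis" for b
    using assms that by simp
  then show ?thesis unfolding grad_def
    by (intro continuous_on_sum continuous_on_scaleR continuous_on_const) auto
qed

lemma slice_deriv:
  fixes u :: "('a::euclidean_space) \<times> real \<Rightarrow> real"
  assumes "u differentiable_on UNIV"
  shows "((\<lambda>t. u (y, t)) has_real_derivative frechet_derivative u (at (y, t)) (0, 1)) (at t)"
proof -
  have du: "(u has_derivative frechet_derivative u (at (y, t))) (at (y, t))"
    by (rule diff_on_UNIV[OF assms])
  have lin: "linear (frechet_derivative u (at (y, t)))" using du has_derivative_linear by blast
  have dp: "((\<lambda>t. (y, t)) has_derivative (\<lambda>h. (0, h))) (at t)"
    by (auto intro!: derivative_eq_intros)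
  have "((u o (\<lambda>t. (y, t))) has_derivative (frechet_derivative u (at (y, t)) o (\<lambda>h. (0, h)))) (at t)"
    by (rule diff_chain_at[OF dp du])
  moreover have "(frechet_derivative u (at (y, t)) o (\<lambda>h. (0, h))) = (\<lambda>h. frechet_derivative u (at (y, t)) (0, 1) * h)"
  proof (rule ext)
    fix h :: real
    have "(0::'a, h) = h *\<^sub>R (0, 1)" by simp
    then show "(frechet_derivative u (at (y, t)) o (\<lambda>h. (0, h))) h = frechet_derivative u (at (y, t)) (0, 1) * h"
      using linear_cmul[OF lin, of h "(0, 1)"] by (simp add: mult.commute)
  qed
  ultimately show ?thesis unfolding has_field_derivative_def o_def by simp
qed

lemma Basis_snd: "((0::'a::euclidean_space), (1::real)) \<in> Basis"
  by (simp add: Basis_prod_def)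


lemma int_restrict:
  fixes f :: "'a::euclidean_space \<Rightarrow> real"
  assumes "f integrable_on B" "\<And>x. x \<notin> B \<Longrightarrow> f x = 0" "B \<subseteq> S"
  shows "integral S f = integral B f"
proof -
  have "(f has_integral integral B f) S"
    by (rule has_integral_on_superset[OF integrable_integral[OF assms(1)] _ assms(3)]) (use assms(2) in simp)
  then show ?thesis by (rule integral_unique)
qed

lemma part1:
  fixes u :: "(real^'m) \<times> real \<Rightarrow> real" and R s \<gamma> :: real
  assumes R: "R > 0" and s: "s \<ge> 1" and g: "\<gamma> > 1" and u: "u \<in> Cc_inf R"
  shows "ineqD R s \<gamma> (\<gamma> - 1) u"
proof -
  define K where "K = closure {x. u x \<noteq> 0}"
  have Kc: "compact K" and KS: "K \<subseteq> strip R" using u unfolding Cc_inf_def K_def by auto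
  have sm: "Ck_on (Suc 0) UNIV u" using u unfolding Cc_inf_def smooth_on_def by blast
  have du: "u differentiable_on UNIV" using sm by simp
  have cpd: "continuous_on UNIV (\<lambda>x. frechet_derivative u (at x) b)" if "b \<in> Basis" for b
    using sm that by simp
  have cu: "continuous_on UNIV u" using Ck_mono[OF sm] by simp
  have cgr: "continuous_on UNIV (grad u)" by (rule grad_cont[OF sm])
  have uz: "u x = 0" if "x \<notin> K" for x
    using that closure_subset[of "{x. u x \<noteq> 0}"] unfolding K_def by blast
  have gz: "grad u x = 0" if "x \<notin> K" for x
  proof (rule grad_zero_open)
    show "open (- K)" using Kc compact_imp_closed by blast
    show "x \<in> - K" using that by simp
    show "\<And>y. y \<in> - K \<Longrightarrow> u y = 0" using uz by simp
  qed
  obtain \<epsilon> where ep: "\<epsilon> > 0" "\<And>y. y \<in> K \<Longrightarrow> \<epsilon> \<le> dl R (snd y)"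
  proof (cases "K = {}")
    case True then show ?thesis using that[of 1] by simp
  next
    case False
    have cc: "continuous_on K (\<lambda>y. dl R (snd y))"
      unfolding dl_def by (intro continuous_intros)
    obtain y0 where y0: "y0 \<in> K" "\<And>y. y \<in> K \<Longrightarrow> dl R (snd y0) \<le> dl R (snd y)"
      using continuous_attains_inf[OF Kc False cc] by blast
    have "y0 \<in> strip R" using y0(1) KS by blast
    then have "dl R (snd y0) > 0" unfolding strip_iff dl_def by simp
    then show ?thesis using that[of "dl R (snd y0)"] y0(2) by blast
  qed
  define c where "c = min \<epsilon> R / 2"
  define d where "d = 2 * R - c"
  have c0: "0 < c" "c \<le> R" "c < R" unfolding c_def using ep(1) R by auto
  have d0: "R \<le> d" "d < 2 * R" unfolding d_def using c0 by auto
  have Kcd: "c < snd y \<and> snd y < d" if "y \<in> K" for y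
  proof -
    have "\<epsilon> \<le> dl R (snd y)" using ep(2)[OF that] .
    moreover have "c < \<epsilon>" unfolding c_def using ep(1) R by linarith
    ultimately have "c < snd y" "c < 2 * R - snd y" unfolding dl_def by linarith+
    then show ?thesis unfolding d_def by linarith
  qed
  obtain a0 where a0: "fst ` K \<subseteq> cbox (-a0) a0"
    using bounded_subset_cbox_symmetric[OF bounded_fst[OF compact_imp_bounded[OF Kc]]] by blast
  define B where "B = cbox (-a0, c) (a0, d)"
  have B_iff: "x \<in> B \<longleftrightarrow> fst x \<in> cbox (-a0) a0 \<and> c \<le> snd x \<and> snd x \<le> d" for x
    unfolding B_def by (cases x) (simp add: cbox_Pair_iff)
  have KB: "x \<in> B" if "x \<in> K" for x
    using B_iff[of x] a0 that Kcd[OF that] by force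
  have BS: "B \<subseteq> strip R"
  proof
    fix x assume "x \<in> B" then show "x \<in> strip R" unfolding B_iff strip_iff using c0 d0 by linarith
  qed
  have dSB: "dS R x = dl R (snd x)" "0 < dS R x" "dS R x \<le> R" if "x \<in> B" for x
  proof -
    have "x \<in> strip R" using BS that by blast
    then show e: "dS R x = dl R (snd x)" by (rule dS_eq)
    show "0 < dS R x" "dS R x \<le> R" unfolding e dl_def using that c0 d0 unfolding B_iff by auto
  qed
  define g1 where "g1 x = norm (grad u x) / dS R x powr (s - 1)" for x
  define g2 where "g2 x = \<bar>u x\<bar> / dS R x powr s" for x
  define g3 where "g3 x = \<bar>u x\<bar> / dS R x * Xf (dS R x / R) powr \<gamma>" for x
  have z1: "g1 x = 0" "g2 x = 0" "g3 x = 0" if "x \<notin> B" for x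
  proof -
    have "x \<notin> K" using KB that by blast
    then show "g1 x = 0" "g2 x = 0" "g3 x = 0" unfolding g1_def g2_def g3_def using uz gz by simp_all
  qed
  have nzB: "\<forall>x\<in>B. dS R x powr (s - 1) \<noteq> 0" "\<forall>x\<in>B. dS R x powr s \<noteq> 0" "\<forall>x\<in>B. dS R x \<noteq> 0"
    using dSB(2) by (metis less_irrefl powr_eq_0_iff)+
  have cd1: "continuous_on B (\<lambda>x. dS R x powr (s - 1))"
    by (rule continuous_on_powr[OF cont_dS continuous_on_const]) (use nzB in simp)
  have cd2: "continuous_on B (\<lambda>x. dS R x powr s)"
    by (rule continuous_on_powr[OF cont_dS continuous_on_const]) (use nzB in simp)
  have cX: "continuous_on B (\<lambda>x. Xf (dS R x / R) powr \<gamma>)"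
    by (rule cont_Xh[OF R cont_dS]) (use dSB in auto)
  have cuB: "continuous_on B u" by (rule continuous_on_subset[OF cu]) simp
  have cgB: "continuous_on B (grad u)" by (rule continuous_on_subset[OF cgr]) simp
  have cg1: "continuous_on B g1" unfolding g1_def by (intro continuous_intros cgB cd1 nzB)
  have cg2: "continuous_on B g2" unfolding g2_def by (intro continuous_intros cuB cd2 nzB)
  have cg3: "continuous_on B g3" unfolding g3_def by (intro continuous_intros cuB cX cont_dS nzB)
  have ig1: "g1 integrable_on B" unfolding B_def by (rule integrable_continuous) (use cg1 B_def in simp)
  have ig2: "g2 integrable_on B" unfolding B_def by (rule integrable_continuous) (use cg2 B_def in simp)
  have ig3: "g3 integrable_on B" unfolding B_def by (rule integrable_continuous) (use cg3 B_def in simp)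
  have I1: "integral (strip R) g1 = integral B g1" by (rule int_restrict[OF ig1 z1(1) BS])
  have I2: "integral (strip R) g2 = integral B g2" by (rule int_restrict[OF ig2 z1(2) BS])
  have I3: "integral (strip R) g3 = integral B g3" by (rule int_restrict[OF ig3 z1(3) BS])
  define C where "C = (\<gamma> - 1) / R powr (s - 1)"
  define G where "G x = g1 x - (s - 1) * g2 x - C * g3 x" for x
  have intG: "integral B G = integral B g1 - (s - 1) * integral B g2 - C * integral B g3"
  proof -
    have m2: "integral B (\<lambda>x. (s - 1) * g2 x) = (s - 1) * integral B g2"
      using integral_cmul[of B "s - 1" g2] by simp
    have m3: "integral B (\<lambda>x. C * g3 x) = C * integral B g3"
      using integral_cmul[of B C g3] by simp
    have i2: "(\<lambda>x. (s - 1) * g2 x) integrable_on B" using integrable_cmul[OF ig2, of "s - 1"] by simp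
    have i3: "(\<lambda>x. C * g3 x) integrable_on B" using integrable_cmul[OF ig3, of C] by simp
    have "integral B G = integral B (\<lambda>x. g1 x - (s - 1) * g2 x) - integral B (\<lambda>x. C * g3 x)"
      unfolding G_def by (rule Henstock_Kurzweil_Integration.integral_diff[OF integrable_diff[OF ig1 i2] i3])
    also have "\<dots> = integral B g1 - (s - 1) * integral B g2 - C * integral B g3"
      using Henstock_Kurzweil_Integration.integral_diff[OF ig1 i2] m2 m3 by simp
    finally show ?thesis .
  qed
  have cG: "continuous_on (cbox (-a0, c) (a0, d)) G"
    unfolding G_def B_def[symmetric] by (intro continuous_intros cg1 cg2 cg3)
  have fub: "integral B G = integral (cbox (-a0) a0) (\<lambda>y. integral (cbox c d) (\<lambda>t. G (y, t)))"
    unfolding B_def by (rule integral_prod_continuous[OF cG])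
  have inner: "0 \<le> integral (cbox c d) (\<lambda>t. G (y, t))" if y: "y \<in> cbox (-a0) a0" for y
  proof -
    have yB: "(y, t) \<in> B" if "t \<in> {c..d}" for t using y that unfolding B_iff by simp
    have "integral (cbox c d) (\<lambda>t. G (y, t)) =
      integral {c..d} (\<lambda>t. norm (grad u (y, t)) / dl R t powr (s - 1) - (s - 1) * (\<bar>u (y, t)\<bar> / dl R t powr s)
            - (\<gamma> - 1) / R powr (s - 1) * (\<bar>u (y, t)\<bar> / dl R t * Xf (dl R t / R) powr \<gamma>))"
    proof (subst cbox_interval, rule integral_cong)
      fix t assume t: "t \<in> {c..d}"
      have "dS R (y, t) = dl R t" using dSB(1)[OF yB[OF t]] by simp
      then show "G (y, t) = norm (grad u (y, t)) / dl R t powr (s - 1) - (s - 1) * (\<bar>u (y, t)\<bar> / dl R t powr s)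
            - (\<gamma> - 1) / R powr (s - 1) * (\<bar>u (y, t)\<bar> / dl R t * Xf (dl R t / R) powr \<gamma>)"
        unfolding G_def g1_def g2_def g3_def C_def by simp
    qed
    also have "0 \<le> \<dots>"
    proof (rule F1D[OF R c0(1,2) d0 s g])
      show "\<And>t. ((\<lambda>t. u (y, t)) has_real_derivative frechet_derivative u (at (y, t)) (0, 1)) (at t)"
        by (rule slice_deriv[OF du])
      show "continuous_on UNIV (\<lambda>t. frechet_derivative u (at (y, t)) (0, 1))"
        by (rule continuous_on_compose2[OF cpd[OF Basis_snd]]) (auto intro!: continuous_intros)
      have "(y, c) \<notin> K" using Kcd[of "(y, c)"] by auto
      then show "u (y, c) = 0" by (rule uz)
      have "(y, d) \<notin> K" using Kcd[of "(y, d)"] by auto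
      then show "u (y, d) = 0" by (rule uz)
      show "continuous_on {c..d} (\<lambda>t. norm (grad u (y, t)))"
        by (rule continuous_on_compose2[OF continuous_on_norm[OF cgr]]) (auto intro!: continuous_intros)
      fix t
      show "\<bar>frechet_derivative u (at (y, t)) (0, 1)\<bar> \<le> norm (grad u (y, t))"
        using Basis_le_norm[OF Basis_snd, of "grad u (y, t)"] grad_inner_basis[OF Basis_snd, of u "(y, t)"]
        by simp
    qed
    finally show ?thesis .
  qed
  have "0 \<le> integral B G"
  proof (cases "(\<lambda>y. integral (cbox c d) (\<lambda>t. G (y, t))) integrable_on cbox (-a0) a0")
    case True
    show ?thesis unfolding fub by (rule integral_nonneg[OF True inner])
  next
    case False
    show ?thesis unfolding fub not_integrable_integral[OF False] by simp
  qed
  then show ?thesis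
    unfolding ineqD_def g1_def[symmetric] g2_def[symmetric] g3_def[symmetric] I1 I2 I3
    using intG unfolding C_def by (simp add: algebra_simps)
qed


lemma Ck_sq: "Ck_on k UNIV (\<lambda>x::'a::euclidean_space. x \<bullet> x)"
proof (cases k)
  case 0 then show ?thesis by (simp add: continuous_on_inner continuous_on_id)
next
  case (Suc k')
  have d: "((\<lambda>x. x \<bullet> x) has_derivative (\<lambda>h. 2 * (x \<bullet> h))) (at x)" for x :: 'a
    by (rule has_derivative_eq_rhs, rule has_derivative_inner[OF has_derivative_ident has_derivative_ident])
       (simp add: inner_commute)
  have e: "(\<lambda>x. frechet_derivative (\<lambda>x. x \<bullet> x) (at x) b) = (\<lambda>x. 2 * (x \<bullet> b))" for b :: 'a
    by (rule pd_eq[OF d])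
  have dd: "(\<lambda>x::'a. x \<bullet> x) differentiable_on UNIV"
    unfolding differentiable_on_def differentiable_def using d by blast
  have "Ck_on k' UNIV (\<lambda>x::'a. 2 * (x \<bullet> b))" for b by (rule Ck_mult[OF Ck_const Ck_inner])
  then show ?thesis unfolding Suc Ck_on.simps e using dd by simp
qed

definition psi :: "real \<Rightarrow> real \<Rightarrow> real \<Rightarrow> real" where
  "psi a R t = Hs ((t - a) / a) * Hs ((2 * R - a - t) / a)"

definition phi :: "real \<Rightarrow> 'a::euclidean_space \<Rightarrow> real" where
  "phi L y = Hs (2 - (y \<bullet> y) / L^2)"

definition uu :: "real \<Rightarrow> real \<Rightarrow> real \<Rightarrow> (real^'m) \<times> real \<Rightarrow> real" where
  "uu L a R x = phi L (fst x) * psi a R (snd x)"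

lemma fst_inner_eq: "fst x \<bullet> fst x = x \<bullet> x - (x \<bullet> (0, 1)) * (x \<bullet> ((0::'a::real_inner), (1::real)))"
  by (cases x) (simp add: inner_Pair inner_real_def)

lemma snd_inner_eq: "snd x = x \<bullet> ((0::'a::real_inner), (1::real))"
  by (cases x) (simp add: inner_Pair)

lemma Ck_uu: "Ck_on k UNIV (uu L a R :: (real^'m) \<times> real \<Rightarrow> real)"
proof -
  define e :: "(real^'m) \<times> real" where "e = (0, 1)"
  have "Ck_on k UNIV (\<lambda>x::(real^'m) \<times> real. 2 + (- 1 / L^2) * (x \<bullet> x + (- 1) * ((x \<bullet> e) * (x \<bullet> e))))"
    by (rule Ck_add[OF Ck_const Ck_mult[OF Ck_const Ck_add[OF Ck_sq Ck_mult[OF Ck_const Ck_mult[OF Ck_inner Ck_inner]]]]])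
  then have q: "Ck_on k UNIV (\<lambda>x::(real^'m) \<times> real. 2 - (fst x \<bullet> fst x) / L^2)"
    unfolding fst_inner_eq e_def by (simp add: field_simps)
  have p1: "Ck_on k UNIV (\<lambda>x::(real^'m) \<times> real. (x \<bullet> e) * (1 / a) + (- 1))"
    by (rule Ck_add[OF Ck_mult[OF Ck_inner Ck_const] Ck_const])
  have p2: "Ck_on k UNIV (\<lambda>x::(real^'m) \<times> real. (2 * R - a) / a + (- 1 / a) * (x \<bullet> e))"
    by (rule Ck_add[OF Ck_const Ck_mult[OF Ck_const Ck_inner]])
  have "Ck_on k UNIV (\<lambda>x::(real^'m) \<times> real. Hs (2 - (fst x \<bullet> fst x) / L^2) *
      (Hs ((x \<bullet> e) * (1 / a) + (- 1)) * Hs ((2 * R - a) / a + (- 1 / a) * (x \<bullet> e))))"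
    by (rule Ck_mult[OF Ck_compose[OF Ck_Hs q] Ck_mult[OF Ck_compose[OF Ck_Hs p1] Ck_compose[OF Ck_Hs p2]]])
  moreover have "(\<lambda>x::(real^'m) \<times> real. Hs (2 - (fst x \<bullet> fst x) / L^2) *
      (Hs ((x \<bullet> e) * (1 / a) + (- 1)) * Hs ((2 * R - a) / a + (- 1 / a) * (x \<bullet> e)))) = uu L a R"
  proof
    fix x :: "(real^'m) \<times> real"
    have "x \<bullet> e = snd x" unfolding e_def by (rule snd_inner_eq[symmetric])
    moreover have "snd x * (1 / a) + (- 1) = (snd x - a) / a \<or> a = 0" by (auto simp: field_simps)
    moreover have "(2 * R - a) / a + (- 1 / a) * snd x = (2 * R - a - snd x) / a"
      by (cases "a = 0") (simp_all add: field_simps)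
    ultimately show "Hs (2 - (fst x \<bullet> fst x) / L^2) *
      (Hs ((x \<bullet> e) * (1 / a) + (- 1)) * Hs ((2 * R - a) / a + (- 1 / a) * (x \<bullet> e))) = uu L a R x"
      unfolding uu_def phi_def psi_def by (auto simp: Hs_zero)
  qed
  ultimately show ?thesis by simp
qed


lemma norm_le_of_inner:
  fixes y :: "'a::real_inner"
  assumes "y \<bullet> y \<le> 2 * L^2" "L > 0"
  shows "norm y \<le> 2 * L"
proof -
  have "L^2 \<ge> 0" by simp
  then have "y \<bullet> y \<le> 4 * L^2" using assms(1) by linarith
  then have "norm y ^ 2 \<le> (2 * L) ^ 2" by (simp add: power2_norm_eq_inner power_mult_distrib)
  then show ?thesis by (rule power2_le_imp_le) (use assms in simp)
qed

lemma uu_nz: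
  assumes a: "a > 0" and L: "L > 0" and nz: "uu L a R x \<noteq> 0"
  shows "fst x \<bullet> fst x \<le> 2 * L^2" "a \<le> snd x" "snd x \<le> 2 * R - a"
proof -
  show "fst x \<bullet> fst x \<le> 2 * L^2"
  proof (rule ccontr)
    assume "\<not> ?thesis"
    then have "2 - (fst x \<bullet> fst x) / L^2 \<le> 0" using L by (simp add: field_simps)
    then have "phi L (fst x) = 0" unfolding phi_def by (rule Hs_zero)
    then show False using nz unfolding uu_def by simp
  qed
  show "a \<le> snd x"
  proof (rule ccontr)
    assume "\<not> ?thesis"
    then have "(snd x - a) / a \<le> 0" using a by (simp add: divide_nonpos_pos)
    then have "Hs ((snd x - a) / a) = 0" by (rule Hs_zero)
    then show False using nz unfolding uu_def psi_def by simp
  qed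
  show "snd x \<le> 2 * R - a"
  proof (rule ccontr)
    assume "\<not> ?thesis"
    then have "(2 * R - a - snd x) / a \<le> 0" using a by (simp add: divide_nonpos_pos)
    then have "Hs ((2 * R - a - snd x) / a) = 0" by (rule Hs_zero)
    then show False using nz unfolding uu_def psi_def by simp
  qed
qed

lemma uu_Cc:
  assumes a: "a > 0" and L: "L > 0"
  shows "(uu L a R :: (real^'m) \<times> real \<Rightarrow> real) \<in> Cc_inf R"
proof -
  define U :: "(real^'m) \<times> real \<Rightarrow> real" where "U = uu L a R"
  define Ks :: "((real^'m) \<times> real) set" where
    "Ks = {x. fst x \<bullet> fst x \<le> 2 * L^2} \<inter> {x. a \<le> snd x} \<inter> {x. snd x \<le> 2 * R - a}"
  have sub: "{x. U x \<noteq> 0} \<subseteq> Ks"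
    unfolding Ks_def U_def using uu_nz[OF a L] by blast
  have cl: "closed Ks" unfolding Ks_def
    by (intro closed_Int closed_Collect_le continuous_intros)
  have bd: "bounded Ks"
    unfolding bounded_iff
  proof (intro exI ballI)
    fix x assume x: "x \<in> Ks"
    have "norm x \<le> norm (fst x) + norm (snd x)" using norm_Pair_le[of "fst x" "snd x"] by simp
    also have "norm (fst x) \<le> 2 * L" by (rule norm_le_of_inner) (use x L Ks_def in auto)
    also have "norm (snd x) \<le> 2 * R + 2 * a" using x a unfolding Ks_def by auto
    finally show "norm x \<le> 2 * L + (2 * R + 2 * a)" by simp
  qed
  have clK: "closure {x. U x \<noteq> 0} \<subseteq> Ks" by (rule closure_minimal[OF sub cl])
  have "compact (closure {x. U x \<noteq> 0})"
    unfolding compact_eq_bounded_closed using bounded_subset[OF bd clK] by simp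
  moreover have "Ks \<subseteq> strip R" unfolding Ks_def strip_def using a by auto
  moreover have "smooth_on UNIV U"
    unfolding smooth_on_def U_def using Ck_uu by blast
  ultimately have "U \<in> Cc_inf R" unfolding Cc_inf_def using clK by blast
  then show ?thesis unfolding U_def .
qed


definition psid :: "real \<Rightarrow> real \<Rightarrow> real \<Rightarrow> real" where
  "psid a R t = Hd ((t - a) / a) / a * Hs ((2 * R - a - t) / a) - Hs ((t - a) / a) * (Hd ((2 * R - a - t) / a) / a)"

lemma Hs_comp_deriv:
  "((\<lambda>t. Hs (p * t + q)) has_real_derivative Hd (p * t + q) * p) (at t)"
  by (rule DERIV_chain2[where f=Hs, OF Hs_deriv]) (auto intro!: derivative_eq_intros)

lemma psi_deriv:
  assumes a: "a > 0"
  shows "(psi a R has_real_derivative psid a R t) (at t)"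
proof -
  have e1: "(\<lambda>t. (t - a) / a) = (\<lambda>t. (1/a) * t + (-1))" using a by (auto simp: field_simps)
  have e2: "(\<lambda>t. (2 * R - a - t) / a) = (\<lambda>t. (-1/a) * t + (2 * R - a) / a)" using a by (auto simp: field_simps)
  have d1: "((\<lambda>t. Hs ((t - a) / a)) has_real_derivative Hd ((t - a) / a) * (1/a)) (at t)"
    using Hs_comp_deriv[of "1/a" "-1" t] e1 by (simp add: fun_eq_iff)
  have d2: "((\<lambda>t. Hs ((2 * R - a - t) / a)) has_real_derivative Hd ((2 * R - a - t) / a) * (-1/a)) (at t)"
    using Hs_comp_deriv[of "-1/a" "(2 * R - a) / a" t] e2 by (simp add: fun_eq_iff)
  show ?thesis using DERIV_mult[OF d1 d2] unfolding psi_def psid_def by (simp add: algebra_simps)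
qed

lemma phi_deriv:
  fixes y :: "'a::euclidean_space"
  shows "(phi L has_derivative (\<lambda>h. Hd (2 - (y \<bullet> y) / L^2) * ((- 2 / L^2) * (y \<bullet> h)))) (at y)"
proof -
  have d0: "((\<lambda>y. 2 - (1 / L^2) * (y \<bullet> y)) has_derivative (\<lambda>h. 0 - (1 / L^2) * (y \<bullet> h + h \<bullet> y))) (at y)"
    by (rule has_derivative_diff[OF has_derivative_const has_derivative_mult_right[OF has_derivative_inner[OF has_derivative_ident has_derivative_ident]]])
  have e: "(\<lambda>h. 0 - (1 / L^2) * (y \<bullet> h + h \<bullet> y)) = (\<lambda>h. (- 2 / L^2) * (y \<bullet> h))"
    by (simp add: inner_commute fun_eq_iff)
  have e2: "(\<lambda>y. 2 - (1 / L^2) * (y \<bullet> y)) = (\<lambda>y. 2 - (y \<bullet> y) / L^2)" by (simp add: fun_eq_iff)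
  have d: "((\<lambda>y. 2 - (y \<bullet> y) / L^2) has_derivative (\<lambda>h. (- 2 / L^2) * (y \<bullet> h))) (at y)"
    using d0 unfolding e e2 .
  have "((Hs o (\<lambda>y. 2 - (y \<bullet> y) / L^2)) has_derivative ((\<lambda>c. Hd (2 - (y \<bullet> y) / L^2) * c) o (\<lambda>h. (- 2 / L^2) * (y \<bullet> h)))) (at y)"
    by (rule diff_chain_at[OF d]) (use Hs_deriv[of "2 - (y \<bullet> y) / L^2"] in \<open>simp add: has_field_derivative_def\<close>)
  then show ?thesis unfolding phi_def o_def by simp
qed

lemma grad_of:
  assumes "(f has_derivative (\<lambda>h. h \<bullet> v)) (at x)"
  shows "grad f x = v"
proof -
  have "frechet_derivative f (at x) = (\<lambda>h. h \<bullet> v)" using assms by (metis frechet_derivative_at)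
  moreover have "(\<Sum>b\<in>Basis. (b \<bullet> v) *\<^sub>R b) = (\<Sum>b\<in>Basis. (v \<bullet> b) *\<^sub>R b)"
    by (simp add: inner_commute)
  ultimately show ?thesis unfolding grad_def by (simp add: euclidean_representation)
qed

lemma grad_uu:
  fixes x :: "(real^'m) \<times> real"
  assumes a: "a > 0"
  shows "grad (uu L a R) x = (((psi a R (snd x) * Hd (2 - (fst x \<bullet> fst x) / L^2) * (- 2 / L^2))) *\<^sub>R fst x,
                              phi L (fst x) * psid a R (snd x))"
proof (rule grad_of)
  have d1: "((\<lambda>x. phi L (fst x)) has_derivative (\<lambda>h. Hd (2 - (fst x \<bullet> fst x) / L^2) * ((- 2 / L^2) * (fst x \<bullet> fst h)))) (at x)"
    using diff_chain_at[OF has_derivative_fst[OF has_derivative_ident] phi_deriv[of L "fst x"]] by (simp add: o_def)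
  have d2: "((\<lambda>x. psi a R (snd x)) has_derivative (\<lambda>h. psid a R (snd x) * snd h)) (at x)"
    using diff_chain_at[OF has_derivative_snd[OF has_derivative_ident] psi_deriv[OF a, of R "snd x", unfolded has_field_derivative_def]]
    by (simp add: o_def)
  show "(uu L a R has_derivative (\<lambda>h. h \<bullet> (((psi a R (snd x) * Hd (2 - (fst x \<bullet> fst x) / L^2) * (- 2 / L^2))) *\<^sub>R fst x,
                              phi L (fst x) * psid a R (snd x)))) (at x)"
    unfolding uu_def
    apply (rule has_derivative_eq_rhs[OF has_derivative_mult[OF d1 d2]])
    by (auto simp: inner_Pair_0 inner_prod_def inner_commute algebra_simps fun_eq_iff)
qed


context
  fixes a R :: real
  assumes a: "a > 0" and aR: "2 * a \<le> R"
begin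

lemma psi_nonneg: "psi a R t \<ge> 0" unfolding psi_def by (simp add: Hs_nonneg)
lemma psi_le1: "psi a R t \<le> 1" unfolding psi_def
  using Hs_nonneg Hs_le1 by (simp add: mult_le_one)

lemma psi_left: "t \<le> R \<Longrightarrow> psi a R t = Hs ((t - a) / a) \<and> psid a R t = Hd ((t - a) / a) / a"
proof -
  assume t: "t \<le> R"
  have "1 \<le> (2 * R - a - t) / a" using a aR t by (simp add: field_simps)
  then show ?thesis unfolding psi_def psid_def using Hs_one Hd_zero by simp
qed

lemma psi_right: "R \<le> t \<Longrightarrow> psi a R t = Hs ((2 * R - a - t) / a) \<and> psid a R t = - (Hd ((2 * R - a - t) / a) / a)"
proof -
  assume t: "R \<le> t"
  have "1 \<le> (t - a) / a" using a aR t by (simp add: field_simps)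
  then show ?thesis unfolding psi_def psid_def using Hs_one Hd_zero by simp
qed

lemma psi_a: "psi a R a = 0" unfolding psi_def by (simp add: Hs_zero)
lemma psi_2Ra: "psi a R (2 * R - a) = 0" unfolding psi_def by (simp add: Hs_zero)
lemma psi_R: "psi a R R = 1" using psi_left[of R] Hs_one[of "(R - a) / a"] a aR by (simp add: field_simps)
lemma psi_mid: "2 * a \<le> t \<Longrightarrow> t \<le> R \<Longrightarrow> psi a R t = 1"
  using psi_left[of t] Hs_one[of "(t - a) / a"] a by (simp add: field_simps)

lemma psi_cont: "continuous_on S (psi a R)"
  using psi_deriv[OF a] by (meson DERIV_continuous_on has_field_derivative_at_within)

lemma Hs_cont: "continuous_on S Hs"
  using Hs_deriv by (meson DERIV_continuous_on has_field_derivative_at_within)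

lemma psid_cont: "continuous_on S (psid a R)"
proof -
  have h: "continuous_on S (\<lambda>t. Hs (p * t + q))" "continuous_on S (\<lambda>t. Hd (p * t + q))" for p q
    by (rule continuous_on_compose2[OF Hs_cont], auto intro!: continuous_intros)
       (rule continuous_on_compose2[OF Hd_cont], auto intro!: continuous_intros)
  have e1: "(t - a) / a = (1/a) * t + (-1)" for t using a by (simp add: field_simps)
  have e2: "(2 * R - a - t) / a = (-1/a) * t + (2 * R - a) / a" for t using a by (simp add: field_simps)
  have an: "\<forall>x\<in>S. a \<noteq> 0" using a by simp
  show ?thesis unfolding psid_def e1 e2 by (intro continuous_intros h an)
qed

end


lemma powr_1s: "(t::real) > 0 \<Longrightarrow> t powr (1 - s) = 1 / t powr (s - 1)"
  using powr_minus_divide[of t "s - 1"] by simp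
lemma powr_ms: "(t::real) > 0 \<Longrightarrow> t powr (1 - s - 1) = 1 / t powr s"
  using powr_minus_divide[of t s] by simp

context
  fixes a R s :: real
  assumes a: "a > 0" and aR: "2 * a \<le> R"
begin

lemma left_ftc:
  "((\<lambda>t. \<bar>psid a R t\<bar> / dl R t powr (s - 1) - (s - 1) * (psi a R t / dl R t powr s)) has_integral R powr (1 - s)) {a..R}"
proof -
  have ab: "a \<le> R" using a aR by simp
  have "((\<lambda>t. psid a R t * t powr (1 - s) + psi a R t * ((1 - s) * t powr (1 - s - 1))) has_integral
        (psi a R R * R powr (1 - s) - psi a R a * a powr (1 - s))) {a..R}"
  proof (rule fundamental_theorem_of_calculus[OF ab])
    fix t assume t: "t \<in> {a..R}"
    then have tp: "t > 0" using a by simp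
    have "((\<lambda>t. psi a R t * t powr (1 - s)) has_real_derivative
        psid a R t * t powr (1 - s) + psi a R t * ((1 - s) * t powr (1 - s - 1))) (at t)"
      using DERIV_mult[OF psi_deriv[OF a, of R t] has_real_derivative_powr[OF tp, of "1 - s"]] by (simp add: algebra_simps)
    then show "((\<lambda>t. psi a R t * t powr (1 - s)) has_vector_derivative
        psid a R t * t powr (1 - s) + psi a R t * ((1 - s) * t powr (1 - s - 1))) (at t within {a..R})"
      by (simp add: has_real_derivative_iff_has_vector_derivative[symmetric] has_field_derivative_at_within)
  qed
  then have h: "((\<lambda>t. psid a R t * t powr (1 - s) + psi a R t * ((1 - s) * t powr (1 - s - 1))) has_integral
        R powr (1 - s)) {a..R}"
    using psi_R[OF a aR] psi_a[OF a aR] by simp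
  show ?thesis
  proof (subst has_integral_cong[OF _])
    show "((\<lambda>t. psid a R t * t powr (1 - s) + psi a R t * ((1 - s) * t powr (1 - s - 1))) has_integral
        R powr (1 - s)) {a..R}" by (rule h)
    fix t assume t: "t \<in> {a..R}"
    then have tp: "t > 0" using a by simp
    have dl: "dl R t = t" using t unfolding dl_def by auto
    have pp: "t powr s > 0" "t powr (s - 1) > 0" using tp by simp_all
    have pd: "psid a R t \<ge> 0" using psi_left[OF a aR, of t] t a Hd_nonneg by simp
    show "\<bar>psid a R t\<bar> / dl R t powr (s - 1) - (s - 1) * (psi a R t / dl R t powr s) =
       psid a R t * t powr (1 - s) + psi a R t * ((1 - s) * t powr (1 - s - 1))"
      unfolding dl powr_1s[OF tp] powr_ms[OF tp] using pd pp by (simp add: field_simps)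
  qed
qed

lemma right_ftc:
  "((\<lambda>t. \<bar>psid a R t\<bar> / dl R t powr (s - 1) - (s - 1) * (psi a R t / dl R t powr s)) has_integral R powr (1 - s)) {R..2 * R - a}"
proof -
  have ab: "R \<le> 2 * R - a" using a aR by simp
  have "((\<lambda>t. psid a R t * (2 * R - t) powr (1 - s) + psi a R t * ((1 - s) * (2 * R - t) powr (1 - s - 1) * (-1))) has_integral
        (psi a R (2 * R - a) * (2 * R - (2 * R - a)) powr (1 - s) - psi a R R * (2 * R - R) powr (1 - s))) {R..2 * R - a}"
  proof (rule fundamental_theorem_of_calculus[OF ab])
    fix t assume t: "t \<in> {R..2 * R - a}"
    then have tp: "2 * R - t > 0" using a by simp
    have d2: "((\<lambda>t. (2 * R - t) powr (1 - s)) has_real_derivative (1 - s) * (2 * R - t) powr (1 - s - 1) * (-1)) (at t)"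
      by (rule DERIV_chain2[where f="\<lambda>x. x powr (1 - s)" and g="\<lambda>t. 2 * R - t", OF has_real_derivative_powr[OF tp, of "1 - s"]])
         (auto intro!: derivative_eq_intros)
    have "((\<lambda>t. psi a R t * (2 * R - t) powr (1 - s)) has_real_derivative
        psid a R t * (2 * R - t) powr (1 - s) + psi a R t * ((1 - s) * (2 * R - t) powr (1 - s - 1) * (-1))) (at t)"
      using DERIV_mult[OF psi_deriv[OF a, of R t] d2] by (simp add: algebra_simps)
    then show "((\<lambda>t. psi a R t * (2 * R - t) powr (1 - s)) has_vector_derivative
        psid a R t * (2 * R - t) powr (1 - s) + psi a R t * ((1 - s) * (2 * R - t) powr (1 - s - 1) * (-1))) (at t within {R..2 * R - a})"
      by (simp add: has_real_derivative_iff_has_vector_derivative[symmetric] has_field_derivative_at_within)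
  qed
  then have h: "((\<lambda>t. psid a R t * (2 * R - t) powr (1 - s) + psi a R t * ((1 - s) * (2 * R - t) powr (1 - s - 1) * (-1))) has_integral
        (- (R powr (1 - s)))) {R..2 * R - a}"
    using psi_R[OF a aR] psi_2Ra[OF a aR] by simp
  have h2: "((\<lambda>t. - (psid a R t * (2 * R - t) powr (1 - s) + psi a R t * ((1 - s) * (2 * R - t) powr (1 - s - 1) * (-1)))) has_integral
        R powr (1 - s)) {R..2 * R - a}"
    using has_integral_neg[OF h] by simp
  show ?thesis
  proof (subst has_integral_cong[OF _])
    show "((\<lambda>t. - (psid a R t * (2 * R - t) powr (1 - s) + psi a R t * ((1 - s) * (2 * R - t) powr (1 - s - 1) * (-1)))) has_integral
        R powr (1 - s)) {R..2 * R - a}" by (rule h2)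
    fix t assume t: "t \<in> {R..2 * R - a}"
    then have tp: "2 * R - t > 0" using a by simp
    have dl: "dl R t = 2 * R - t" using t unfolding dl_def by auto
    have pp: "(2 * R - t) powr s > 0" "(2 * R - t) powr (s - 1) > 0" using tp by simp_all
    have pd: "psid a R t \<le> 0" using psi_right[OF a aR, of t] t a Hd_nonneg by simp
    show "\<bar>psid a R t\<bar> / dl R t powr (s - 1) - (s - 1) * (psi a R t / dl R t powr s) =
       - (psid a R t * (2 * R - t) powr (1 - s) + psi a R t * ((1 - s) * (2 * R - t) powr (1 - s - 1) * (-1)))"
      unfolding dl powr_1s[OF tp] powr_ms[OF tp] using pd pp by (simp add: field_simps)
  qed
qed

end


context
  fixes a R s :: real
  assumes a: "a > 0" and aR: "2 * a \<le> R"
begin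

lemma dl_pos: "t \<in> {a..2 * R - a} \<Longrightarrow> dl R t > 0 \<and> dl R t \<le> R"
  using a unfolding dl_def by auto

lemma cont_aux:
  "continuous_on {a..2 * R - a} (\<lambda>t. psi a R t / dl R t powr s)"
  "continuous_on {a..2 * R - a} (\<lambda>t. psi a R t / dl R t powr (s - 1))"
  "continuous_on {a..2 * R - a} (\<lambda>t. \<bar>psid a R t\<bar> / dl R t powr (s - 1))"
  "continuous_on {a..2 * R - a} (\<lambda>t. psi a R t / dl R t * Xf (dl R t / R) powr 1)"
proof -
  have p: "\<And>t. t \<in> {a..2 * R - a} \<Longrightarrow> dl R t > 0" "\<And>t. t \<in> {a..2 * R - a} \<Longrightarrow> dl R t \<le> R"
    using dl_pos by auto
  have nz0: "\<forall>t\<in>{a..2 * R - a}. dl R t \<noteq> 0" using p(1) by (metis less_irrefl)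
  then have nz: "\<forall>t\<in>{a..2 * R - a}. dl R t powr (s - 1) \<noteq> 0" "\<forall>t\<in>{a..2 * R - a}. dl R t powr s \<noteq> 0"
    by auto
  have c1: "continuous_on {a..2 * R - a} (\<lambda>t. dl R t powr (s - 1))" by (rule cont_dlpow) (use p in auto)
  have c2: "continuous_on {a..2 * R - a} (\<lambda>t. dl R t powr s)" by (rule cont_dlpow) (use p in auto)
  have R: "R > 0" using a aR by simp
  have c3: "continuous_on {a..2 * R - a} (\<lambda>t. Xf (dl R t / R) powr 1)" by (rule cont_Xdl[OF R]) (use p in auto)
  have cp: "continuous_on {a..2 * R - a} (psi a R)" by (rule psi_cont[OF a aR])
  have cd: "continuous_on {a..2 * R - a} (psid a R)" by (rule psid_cont[OF a aR])
  show "continuous_on {a..2 * R - a} (\<lambda>t. psi a R t / dl R t powr s)"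
    by (intro continuous_intros cp c2 nz)
  show "continuous_on {a..2 * R - a} (\<lambda>t. psi a R t / dl R t powr (s - 1))"
    by (intro continuous_intros cp c1 nz)
  show "continuous_on {a..2 * R - a} (\<lambda>t. \<bar>psid a R t\<bar> / dl R t powr (s - 1))"
    by (intro continuous_intros cd c1 nz)
  show "continuous_on {a..2 * R - a} (\<lambda>t. psi a R t / dl R t * Xf (dl R t / R) powr 1)"
    by (intro continuous_intros cp c3 dl_cont nz0)
qed

lemma claim1:
  "integral {a..2 * R - a} (\<lambda>t. \<bar>psid a R t\<bar> / dl R t powr (s - 1))
     - (s - 1) * integral {a..2 * R - a} (\<lambda>t. psi a R t / dl R t powr s) = 2 * R powr (1 - s)"
proof -
  have "((\<lambda>t. \<bar>psid a R t\<bar> / dl R t powr (s - 1) - (s - 1) * (psi a R t / dl R t powr s)) has_integral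
      (R powr (1 - s) + R powr (1 - s))) {a..2 * R - a}"
    by (rule has_integral_combine[OF _ _ left_ftc[OF a aR] right_ftc[OF a aR]]) (use a aR in auto)
  then have h: "integral {a..2 * R - a} (\<lambda>t. \<bar>psid a R t\<bar> / dl R t powr (s - 1) - (s - 1) * (psi a R t / dl R t powr s))
      = 2 * R powr (1 - s)" by (simp add: integral_unique)
  have i1: "(\<lambda>t. \<bar>psid a R t\<bar> / dl R t powr (s - 1)) integrable_on {a..2 * R - a}"
    by (rule integrable_continuous_interval[OF cont_aux(3)])
  have i2: "(\<lambda>t. (s - 1) * (psi a R t / dl R t powr s)) integrable_on {a..2 * R - a}"
    by (rule integrable_continuous_interval) (intro continuous_intros cont_aux(1))
  have "integral {a..2 * R - a} (\<lambda>t. (s - 1) * (psi a R t / dl R t powr s))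
     = (s - 1) * integral {a..2 * R - a} (\<lambda>t. psi a R t / dl R t powr s)"
    using integral_cmul[of "{a..2 * R - a}" "s - 1" "\<lambda>t. psi a R t / dl R t powr s"] by simp
  then show ?thesis using h Henstock_Kurzweil_Integration.integral_diff[OF i1 i2] by simp
qed

lemma lnX_deriv:
  assumes t: "0 < t" "t \<le> R"
  shows "((\<lambda>t. ln (Xf (t / R))) has_real_derivative Xf (t / R) / t) (at t)"
proof -
  have R: "R > 0" using t by simp
  have xp: "Xf (t / R) > 0" using Xf_pos[of "t / R"] t R by simp
  have "((\<lambda>t. ln (Xf (t / R))) has_real_derivative (1 / Xf (t / R)) * (Xf (t / R) ^ 2 / t)) (at t)"
    by (rule DERIV_chain2[where f=ln and g="\<lambda>t. Xf (t / R)", OF DERIV_ln_divide[OF xp] Xf_deriv[OF R t]])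
  then show ?thesis using xp by (simp add: power2_eq_square)
qed

lemma claim2:
  "integral {a..2 * R - a} (\<lambda>t. psi a R t / dl R t * Xf (dl R t / R) powr 1) \<ge> ln (1 - ln (2 * a / R))"
proof -
  have R: "R > 0" using a aR by simp
  have sub: "{2 * a..R} \<subseteq> {a..2 * R - a}" using a aR by auto
  have ci: "continuous_on {2 * a..R} (\<lambda>t. psi a R t / dl R t * Xf (dl R t / R) powr 1)"
    by (rule continuous_on_subset[OF cont_aux(4) sub])
  have le: "integral {2 * a..R} (\<lambda>t. psi a R t / dl R t * Xf (dl R t / R) powr 1)
      \<le> integral {a..2 * R - a} (\<lambda>t. psi a R t / dl R t * Xf (dl R t / R) powr 1)"
  proof (rule integral_subset_le[OF sub])
    show "(\<lambda>t. psi a R t / dl R t * Xf (dl R t / R) powr 1) integrable_on {2 * a..R}"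
      by (rule integrable_continuous_interval[OF ci])
    show "(\<lambda>t. psi a R t / dl R t * Xf (dl R t / R) powr 1) integrable_on {a..2 * R - a}"
      by (rule integrable_continuous_interval[OF cont_aux(4)])
    show "\<forall>x\<in>{a..2 * R - a}. 0 \<le> psi a R x / dl R x * Xf (dl R x / R) powr 1"
      using psi_nonneg[OF a aR] dl_pos by (simp add: divide_nonneg_pos)
  qed
  have ftc: "((\<lambda>t. Xf (t / R) / t) has_integral (ln (Xf (R / R)) - ln (Xf (2 * a / R)))) {2 * a..R}"
  proof (rule fundamental_theorem_of_calculus)
    show "2 * a \<le> R" by (rule aR)
    fix t assume t: "t \<in> {2 * a..R}"
    have "0 < t" "t \<le> R" using t a by auto
    from lnX_deriv[OF this] show "((\<lambda>t. ln (Xf (t / R))) has_vector_derivative Xf (t / R) / t) (at t within {2 * a..R})"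
      by (simp add: has_real_derivative_iff_has_vector_derivative[symmetric] has_field_derivative_at_within)
  qed
  have eq: "integral {2 * a..R} (\<lambda>t. psi a R t / dl R t * Xf (dl R t / R) powr 1) = integral {2 * a..R} (\<lambda>t. Xf (t / R) / t)"
  proof (rule integral_cong)
    fix t assume t: "t \<in> {2 * a..R}"
    have "dl R t = t" using t unfolding dl_def by auto
    moreover have "psi a R t = 1" using psi_mid[OF a aR] t by auto
    moreover have "Xf (t / R) > 0" using Xf_pos[of "t / R"] t a R by auto
    ultimately show "psi a R t / dl R t * Xf (dl R t / R) powr 1 = Xf (t / R) / t" by simp
  qed
  have v: "ln (Xf (R / R)) - ln (Xf (2 * a / R)) = ln (1 - ln (2 * a / R))"
  proof -
    have "ln (2 * a / R) \<le> 0" using a aR R by simp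
    then have p: "1 - ln (2 * a / R) > 0" by simp
    have "Xf (R / R) = 1" using R unfolding Xf_def by simp
    moreover have "ln (Xf (2 * a / R)) = - ln (1 - ln (2 * a / R))" unfolding Xf_def using p by (simp add: ln_div)
    ultimately show ?thesis by simp
  qed
  show ?thesis using le eq integral_unique[OF ftc] v by simp
qed

end


lemma psi_nonneg': "psi a R t \<ge> 0" unfolding psi_def by (simp add: Hs_nonneg)

lemma phi_nonneg: "phi L y \<ge> 0" unfolding phi_def by (rule Hs_nonneg)
lemma phi_le1: "phi L y \<le> 1" unfolding phi_def by (rule Hs_le1)
lemma phi_one: "L > 0 \<Longrightarrow> y \<bullet> y \<le> L^2 \<Longrightarrow> phi L y = 1"
  unfolding phi_def by (rule Hs_one) (simp add: field_simps)
lemma Hs_cont': "continuous_on S Hs"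
  using Hs_deriv by (meson DERIV_continuous_on has_field_derivative_at_within)

lemma phi_cont: "continuous_on S (phi L)"
proof -
  have e: "(\<lambda>y. Hs (2 - (y \<bullet> y) / L^2)) = (\<lambda>y. Hs (2 - (y \<bullet> y) * inverse (L^2)))"
    by (simp add: divide_inverse)
  show ?thesis unfolding phi_def e
    by (rule continuous_on_compose2[OF Hs_cont'[of UNIV]]) (auto intro!: continuous_intros)
qed

lemma content_cube:
  assumes "r \<ge> 0"
  shows "Henstock_Kurzweil_Integration.content (cbox (- (\<chi> i. r)) (\<chi> i. r) :: (real^'m) set) = (2 * r) ^ CARD('m)"
proof -
  have "(0::real^'m) \<in> cbox (- (\<chi> i. r)) (\<chi> i. r)" using assms by (simp add: mem_box_cart)
  then have "cbox (- (\<chi> i. r)) (\<chi> i. r) \<noteq> ({} :: (real^'m) set)" by (metis empty_iff)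
  then show ?thesis using assms by (simp add: content_cbox_cart)
qed

lemma cube_iff: "(y :: real^'m) \<in> cbox (- (\<chi> i. r)) (\<chi> i. r) \<longleftrightarrow> (\<forall>i. \<bar>y $ i\<bar> \<le> r)"
  by (auto simp: mem_box_cart abs_le_iff minus_le_iff)

lemma inner_cart: "(y :: real^'m) \<bullet> y = (\<Sum>i\<in>UNIV. (y $ i)^2)"
  by (simp add: inner_vec_def power2_eq_square)

lemma phi_one_box:
  assumes L: "L > 0" and y: "(y :: real^'m) \<in> cbox (- (\<chi> i. L / CARD('m))) (\<chi> i. L / CARD('m))"
  shows "phi L y = 1"
proof (rule phi_one[OF L])
  have m: "real CARD('m) \<ge> 1" by simp
  have "(y $ i)^2 \<le> (L / CARD('m))^2" for i
  proof -
    have "\<bar>y $ i\<bar> \<le> L / CARD('m)" using y unfolding cube_iff by blast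
    then have "\<bar>y $ i\<bar>^2 \<le> (L / CARD('m))^2" by (rule power_mono) simp
    then show ?thesis by simp
  qed
  then have "(\<Sum>i\<in>UNIV. (y $ i)^2) \<le> (\<Sum>i\<in>(UNIV::'m set). (L / CARD('m))^2)" by (intro sum_mono)
  also have "\<dots> = L^2 / CARD('m)" by (simp add: power2_eq_square)
  also have "\<dots> \<le> L^2"
  proof -
    have "L^2 * 1 \<le> L^2 * real CARD('m)" by (rule mult_left_mono[OF m]) simp
    then show ?thesis using m by (simp add: divide_le_eq)
  qed
  finally show "y \<bullet> y \<le> L^2" unfolding inner_cart .
qed

lemma support_box:
  assumes L: "L > 0" and yy: "(y :: real^'m) \<bullet> y \<le> 2 * L^2"
  shows "y \<in> cbox (- (\<chi> i. 2 * L)) (\<chi> i. 2 * L)"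
  unfolding cube_iff using component_le_norm_cart[of y] norm_le_of_inner[OF yy L] by (meson order_trans)

lemma grad_uu_bound:
  fixes x :: "(real^'m) \<times> real"
  assumes a: "a > 0" and L: "L > 0" and M: "\<And>t. Hd t \<le> M"
  shows "norm (grad (uu L a R) x) \<le> psi a R (snd x) * (4 * M / L) + phi L (fst x) * \<bar>psid a R (snd x)\<bar>"
proof -
  define y where "y = fst x"
  define t where "t = snd x"
  define h where "h = Hd (2 - (y \<bullet> y) / L^2)"
  have gp: "grad (uu L a R) x = ((psi a R t * h * (- 2 / L^2)) *\<^sub>R y, phi L y * psid a R t)"
    unfolding y_def t_def h_def by (rule grad_uu[OF a])
  have M0: "M \<ge> 0" using M[of 0] Hd_nonneg[of 0] by linarith
  have n1: "norm ((psi a R t * h * (- 2 / L^2)) *\<^sub>R y) \<le> psi a R t * (4 * M / L)"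
  proof (cases "y \<bullet> y \<le> 2 * L^2")
    case True
    have ny: "norm y \<le> 2 * L" by (rule norm_le_of_inner[OF True L])
    have "norm ((psi a R t * h * (- 2 / L^2)) *\<^sub>R y) = psi a R t * h * (2 / L^2) * norm y"
      using psi_nonneg'[of a R t] Hd_nonneg[of "2 - (y \<bullet> y) / L^2"] unfolding h_def
      by (simp add: abs_mult)
    also have "\<dots> \<le> psi a R t * M * (2 / L^2) * (2 * L)"
      by (intro mult_mono mult_left_mono psi_nonneg' ny) (use M M0 L Hd_nonneg h_def psi_nonneg'[of a R t] in auto)
    also have "\<dots> = psi a R t * (4 * M / L)" using L by (simp add: power2_eq_square field_simps)
    finally show ?thesis .
  next
    case False
    then have "2 - (y \<bullet> y) / L^2 \<le> 0" using L by (simp add: field_simps)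
    then have "h = 0" unfolding h_def using Hd_zero by blast
    moreover have "0 \<le> psi a R t * (4 * M / L)"
      using psi_nonneg'[of a R t] M[of 0] Hd_nonneg[of 0] L by simp
    ultimately show ?thesis by simp
  qed
  have "norm (grad (uu L a R) x) \<le> norm ((psi a R t * h * (- 2 / L^2)) *\<^sub>R y) + norm (phi L y * psid a R t)"
    unfolding gp by (rule norm_Pair_le)
  also have "norm (phi L y * psid a R t) = phi L y * \<bar>psid a R t\<bar>" using phi_nonneg[of L y] by (simp add: abs_mult)
  finally show ?thesis using n1 unfolding y_def t_def by linarith
qed


lemma cont_snd_comp: "continuous_on UNIV g \<Longrightarrow> continuous_on S (\<lambda>x. g (snd x))"
  by (rule continuous_on_compose2[of UNIV g]) (auto intro!: continuous_intros)
lemma cont_fst_comp: "continuous_on UNIV g \<Longrightarrow> continuous_on S (\<lambda>x. g (fst x))"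
  by (rule continuous_on_compose2[of UNIV g]) (auto intro!: continuous_intros)

lemma integral_mult_const: "integral S (\<lambda>x. c * f x) = c * integral S (f :: 'a::euclidean_space \<Rightarrow> real)"
  using integral_cmul[of S c f] unfolding real_scaleR_def .

lemma part2_core:
  fixes R s C L a M :: real
  assumes R: "R > 0" and s: "s \<ge> 1" and a: "a > 0" and aR: "2 * a \<le> R" and L: "L > 0"
    and M: "\<And>t. Hd t \<le> M"
    and ineq: "ineqD R s 1 C (uu L a R :: (real^'m) \<times> real \<Rightarrow> real)"
  shows "(4 * M / L) * integral {a..2 * R - a} (\<lambda>t. psi a R t / dl R t powr (s - 1))
            * Henstock_Kurzweil_Integration.content (cbox (- (\<chi> i. 2 * L)) (\<chi> i. 2 * L) :: (real^'m) set)
          + integral {a..2 * R - a} (\<lambda>t. \<bar>psid a R t\<bar> / dl R t powr (s - 1))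
            * integral (cbox (- (\<chi> i. 2 * L)) (\<chi> i. 2 * L) :: (real^'m) set) (phi L)
       \<ge> (s - 1) * (integral (cbox (- (\<chi> i. 2 * L)) (\<chi> i. 2 * L) :: (real^'m) set) (phi L)
             * integral {a..2 * R - a} (\<lambda>t. psi a R t / dl R t powr s))
         + C / R powr (s - 1) * (integral (cbox (- (\<chi> i. 2 * L)) (\<chi> i. 2 * L) :: (real^'m) set) (phi L)
             * integral {a..2 * R - a} (\<lambda>t. psi a R t / dl R t * Xf (dl R t / R) powr 1))"
proof -
  define U :: "(real^'m) \<times> real \<Rightarrow> real" where "U = uu L a R"
  define Box1 :: "(real^'m) set" where "Box1 = cbox (- (\<chi> i. 2 * L)) (\<chi> i. 2 * L)"
  define B :: "((real^'m) \<times> real) set" where "B = cbox (- (\<chi> i. 2 * L), a) ((\<chi> i. 2 * L), 2 * R - a)"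
  define Phi0 where "Phi0 = integral Box1 (phi L)"
  define A1 where "A1 = integral {a..2 * R - a} (\<lambda>t. psi a R t / dl R t powr s)"
  define B1 where "B1 = integral {a..2 * R - a} (\<lambda>t. psi a R t / dl R t * Xf (dl R t / R) powr 1)"
  define P where "P = integral {a..2 * R - a} (\<lambda>t. psi a R t / dl R t powr (s - 1))"
  define Q where "Q = integral {a..2 * R - a} (\<lambda>t. \<bar>psid a R t\<bar> / dl R t powr (s - 1))"
  define K where "K = 4 * M / L"
  have B_iff: "x \<in> B \<longleftrightarrow> fst x \<in> Box1 \<and> a \<le> snd x \<and> snd x \<le> 2 * R - a" for x
    unfolding B_def Box1_def by (cases x) (simp add: cbox_Pair_iff)
  have Bprod: "B = cbox (- (\<chi> i. 2 * L), a) ((\<chi> i. 2 * L), 2 * R - a)" by (rule B_def)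
  define Ks :: "((real^'m) \<times> real) set" where
    "Ks = {x. fst x \<bullet> fst x \<le> 2 * L^2} \<inter> {x. a \<le> snd x} \<inter> {x. snd x \<le> 2 * R - a}"
  have KsB: "Ks \<subseteq> B"
  proof
    fix x assume x: "x \<in> Ks"
    have "fst x \<in> Box1" unfolding Box1_def by (rule support_box[OF L]) (use x Ks_def in simp)
    then show "x \<in> B" using x unfolding B_iff Ks_def by simp
  qed
  have Uz: "U x = 0" if "x \<notin> Ks" for x
    using uu_nz[OF a L, of R x] that unfolding U_def Ks_def by blast
  have clKs: "closed Ks" unfolding Ks_def
    by (intro closed_Int closed_Collect_le continuous_intros)
  have Gz: "grad U x = 0" if "x \<notin> B" for x
  proof (rule grad_zero_open)
    show "open (- Ks)" using clKs by (simp add: open_Compl)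
    show "x \<in> - Ks" using that KsB by blast
    show "\<And>y. y \<in> - Ks \<Longrightarrow> U y = 0" using Uz by simp
  qed
  have UzB: "U x = 0" if "x \<notin> B" for x using Uz KsB that by blast
  have BS: "B \<subseteq> strip R"
  proof
    fix x assume "x \<in> B" then show "x \<in> strip R" unfolding B_iff strip_iff using a by linarith
  qed
  have dSB: "dS R x = dl R (snd x)" "0 < dS R x" "dS R x \<le> R" if "x \<in> B" for x
  proof -
    have "x \<in> strip R" using BS that by blast
    then show e: "dS R x = dl R (snd x)" by (rule dS_eq)
    show "0 < dS R x" "dS R x \<le> R" unfolding e dl_def using that a unfolding B_iff by auto
  qed
  have sm: "Ck_on (Suc 0) UNIV U" unfolding U_def by (rule Ck_uu)
  have cU: "continuous_on UNIV U" using Ck_mono[OF sm] by simp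
  have cgr: "continuous_on UNIV (grad U)" by (rule grad_cont[OF sm])
  have nzB: "\<forall>x\<in>B. dS R x powr (s - 1) \<noteq> 0" "\<forall>x\<in>B. dS R x powr s \<noteq> 0" "\<forall>x\<in>B. dS R x \<noteq> 0"
    using dSB(2) by (metis less_irrefl powr_eq_0_iff)+
  have cd1: "continuous_on B (\<lambda>x. dS R x powr (s - 1))"
    by (rule continuous_on_powr[OF cont_dS continuous_on_const]) (use nzB in simp)
  have cd2: "continuous_on B (\<lambda>x. dS R x powr s)"
    by (rule continuous_on_powr[OF cont_dS continuous_on_const]) (use nzB in simp)
  have cX: "continuous_on B (\<lambda>x. Xf (dS R x / R) powr 1)"
    by (rule cont_Xh[OF R cont_dS]) (use dSB in auto)
  have cuB: "continuous_on B U" by (rule continuous_on_subset[OF cU]) simp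
  have cgB: "continuous_on B (grad U)" by (rule continuous_on_subset[OF cgr]) simp
  define g1 where "g1 x = norm (grad U x) / dS R x powr (s - 1)" for x
  define g2 where "g2 x = \<bar>U x\<bar> / dS R x powr s" for x
  define g3 where "g3 x = \<bar>U x\<bar> / dS R x * Xf (dS R x / R) powr 1" for x
  define hb :: "(real^'m) \<times> real \<Rightarrow> real" where "hb x = (psi a R (snd x) * K + phi L (fst x) * \<bar>psid a R (snd x)\<bar>) / dS R x powr (s - 1)" for x
  have cg1: "continuous_on B g1" unfolding g1_def by (intro continuous_intros cgB cd1 nzB)
  have cg2: "continuous_on B g2" unfolding g2_def by (intro continuous_intros cuB cd2 nzB)
  have cg3: "continuous_on B g3" unfolding g3_def by (intro continuous_intros cuB cX cont_dS nzB)
  have cpsi: "continuous_on B (\<lambda>x. psi a R (snd x))" by (rule cont_snd_comp[OF psi_cont[OF a aR]])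
  have cpsid: "continuous_on B (\<lambda>x. psid a R (snd x))" by (rule cont_snd_comp[OF psid_cont[OF a aR]])
  have cphi: "continuous_on B (\<lambda>x. phi L (fst x))" by (rule cont_fst_comp[OF phi_cont])
  have chb: "continuous_on B hb" unfolding hb_def by (intro continuous_intros cpsi cpsid cphi cd1 nzB)
  have ig1: "g1 integrable_on B" unfolding Bprod by (rule integrable_continuous) (use cg1 B_def in simp)
  have ig2: "g2 integrable_on B" unfolding Bprod by (rule integrable_continuous) (use cg2 B_def in simp)
  have ig3: "g3 integrable_on B" unfolding Bprod by (rule integrable_continuous) (use cg3 B_def in simp)
  have ihb: "hb integrable_on B" unfolding Bprod by (rule integrable_continuous) (use chb B_def in simp)
  have z1: "g1 x = 0" "g2 x = 0" "g3 x = 0" if "x \<notin> B" for x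
    unfolding g1_def g2_def g3_def using Gz[OF that] UzB[OF that] by simp_all
  have I1: "integral (strip R) g1 = integral B g1" by (rule int_restrict[OF ig1 z1(1) BS])
  have I2: "integral (strip R) g2 = integral B g2" by (rule int_restrict[OF ig2 z1(2) BS])
  have I3: "integral (strip R) g3 = integral B g3" by (rule int_restrict[OF ig3 z1(3) BS])
  have tB: "(y, t) \<in> B" if "y \<in> Box1" "t \<in> {a..2 * R - a}" for y t using that unfolding B_iff by simp
  have Uyt: "\<bar>U (y, t)\<bar> = phi L y * psi a R t" for y t
    unfolding U_def uu_def using phi_nonneg[of L y] psi_nonneg'[of a R t] by (simp add: abs_mult)
  have cphi1: "continuous_on Box1 (phi L)" by (rule phi_cont)
  have iphi: "phi L integrable_on Box1" unfolding Box1_def by (rule integrable_continuous) (use cphi1 Box1_def in simp)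
  have J2: "integral B g2 = Phi0 * A1"
  proof -
    have "integral B g2 = integral Box1 (\<lambda>y. integral (cbox a (2 * R - a)) (\<lambda>t. g2 (y, t)))"
      unfolding Bprod Box1_def by (rule integral_prod_continuous) (use cg2 B_def in simp)
    also have "\<dots> = integral Box1 (\<lambda>y. A1 * phi L y)"
    proof (rule integral_cong)
      fix y assume y: "y \<in> Box1"
      have "integral {a..2 * R - a} (\<lambda>t. g2 (y, t)) = integral {a..2 * R - a} (\<lambda>t. phi L y * (psi a R t / dl R t powr s))"
      proof (rule integral_cong)
        fix t assume t: "t \<in> {a..2 * R - a}"
        show "g2 (y, t) = phi L y * (psi a R t / dl R t powr s)"
          unfolding g2_def Uyt using dSB(1)[OF tB[OF y t]] by simp
      qed
      also have "\<dots> = phi L y * A1" unfolding A1_def by (rule integral_mult_const)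
      finally show "integral (cbox a (2 * R - a)) (\<lambda>t. g2 (y, t)) = A1 * phi L y" by simp
    qed
    also have "\<dots> = A1 * Phi0" unfolding Phi0_def by (rule integral_mult_const)
    finally show ?thesis by simp
  qed
  have J3: "integral B g3 = Phi0 * B1"
  proof -
    have "integral B g3 = integral Box1 (\<lambda>y. integral (cbox a (2 * R - a)) (\<lambda>t. g3 (y, t)))"
      unfolding Bprod Box1_def by (rule integral_prod_continuous) (use cg3 B_def in simp)
    also have "\<dots> = integral Box1 (\<lambda>y. B1 * phi L y)"
    proof (rule integral_cong)
      fix y assume y: "y \<in> Box1"
      have "integral {a..2 * R - a} (\<lambda>t. g3 (y, t)) = integral {a..2 * R - a} (\<lambda>t. phi L y * (psi a R t / dl R t * Xf (dl R t / R) powr 1))"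
      proof (rule integral_cong)
        fix t assume t: "t \<in> {a..2 * R - a}"
        show "g3 (y, t) = phi L y * (psi a R t / dl R t * Xf (dl R t / R) powr 1)"
          unfolding g3_def Uyt using dSB(1)[OF tB[OF y t]] by simp
      qed
      also have "\<dots> = phi L y * B1" unfolding B1_def by (rule integral_mult_const)
      finally show "integral (cbox a (2 * R - a)) (\<lambda>t. g3 (y, t)) = B1 * phi L y" by simp
    qed
    also have "\<dots> = B1 * Phi0" unfolding Phi0_def by (rule integral_mult_const)
    finally show ?thesis by simp
  qed
  have J1: "integral B g1 \<le> K * P * Henstock_Kurzweil_Integration.content Box1 + Q * Phi0"
  proof -
    have "integral B g1 \<le> integral B hb"
    proof (rule integral_le[OF ig1 ihb])
      fix x assume x: "x \<in> B"
      have "norm (grad U x) \<le> psi a R (snd x) * K + phi L (fst x) * \<bar>psid a R (snd x)\<bar>"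
        unfolding U_def K_def by (rule grad_uu_bound[OF a L M])
      moreover have "dS R x powr (s - 1) > 0" using dSB(2)[OF x] by simp
      ultimately show "g1 x \<le> hb x" unfolding g1_def hb_def by (simp add: divide_right_mono)
    qed
    also have "integral B hb = integral Box1 (\<lambda>y. integral (cbox a (2 * R - a)) (\<lambda>t. hb (y, t)))"
      unfolding Bprod Box1_def by (rule integral_prod_continuous) (use chb B_def in simp)
    also have "\<dots> = integral Box1 (\<lambda>y. K * P + Q * phi L y)"
    proof (rule integral_cong)
      fix y assume y: "y \<in> Box1"
      have i1: "(\<lambda>t. K * (psi a R t / dl R t powr (s - 1))) integrable_on {a..2 * R - a}"
        by (rule integrable_continuous_interval) (intro continuous_intros cont_aux(2)[OF a aR])
      have i2: "(\<lambda>t. phi L y * (\<bar>psid a R t\<bar> / dl R t powr (s - 1))) integrable_on {a..2 * R - a}"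
        by (rule integrable_continuous_interval) (intro continuous_intros cont_aux(3)[OF a aR])
      have "integral {a..2 * R - a} (\<lambda>t. hb (y, t)) = integral {a..2 * R - a}
         (\<lambda>t. K * (psi a R t / dl R t powr (s - 1)) + phi L y * (\<bar>psid a R t\<bar> / dl R t powr (s - 1)))"
      proof (rule integral_cong)
        fix t assume t: "t \<in> {a..2 * R - a}"
        show "hb (y, t) = K * (psi a R t / dl R t powr (s - 1)) + phi L y * (\<bar>psid a R t\<bar> / dl R t powr (s - 1))"
          unfolding hb_def using dSB(1)[OF tB[OF y t]] by (simp add: add_divide_distrib)
      qed
      also have "\<dots> = K * P + phi L y * Q"
        unfolding Henstock_Kurzweil_Integration.integral_add[OF i1 i2] P_def Q_def integral_mult_const ..
      finally show "integral (cbox a (2 * R - a)) (\<lambda>t. hb (y, t)) = K * P + Q * phi L y" by simp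
    qed
    also have "\<dots> = K * P * Henstock_Kurzweil_Integration.content Box1 + Q * Phi0"
    proof -
      have ic: "(\<lambda>y. K * P) integrable_on Box1" unfolding Box1_def by (rule integrable_const)
      have iq: "(\<lambda>y. Q * phi L y) integrable_on Box1" using integrable_cmul[OF iphi, of Q] by simp
      have "integral Box1 (\<lambda>y. K * P + Q * phi L y) = integral Box1 (\<lambda>y. K * P) + integral Box1 (\<lambda>y. Q * phi L y)"
        by (rule Henstock_Kurzweil_Integration.integral_add[OF ic iq])
      moreover have "integral Box1 (\<lambda>y. K * P) = K * P * Henstock_Kurzweil_Integration.content Box1"
        unfolding Box1_def by simp
      moreover have "integral Box1 (\<lambda>y. Q * phi L y) = Q * Phi0" unfolding Phi0_def by (rule integral_mult_const)
      ultimately show ?thesis by linarith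
    qed
    finally show ?thesis .
  qed
  have "(s - 1) * integral (strip R) g2 + C / R powr (s - 1) * integral (strip R) g3 \<le> integral (strip R) g1"
    using ineq unfolding ineqD_def U_def[symmetric] g1_def[symmetric] g2_def[symmetric] g3_def[symmetric] .
  then show ?thesis
    using J1 J2 J3 unfolding I1 I2 I3 K_def P_def Q_def Phi0_def A1_def B1_def Box1_def
    by (simp add: mult.commute)
qed


lemma lin_aux: "(t::real) + q \<ge> p + c \<Longrightarrow> q - p = d \<Longrightarrow> c = e \<Longrightarrow> f = e - d \<Longrightarrow> f \<le> t"
  by linarith

lemma part2:
  fixes R s C :: real
  assumes R: "R > 0" and s: "s \<ge> 1" and C: "C > 0"
  shows "\<not> (\<forall>u\<in>(Cc_inf R :: ((real^'m) \<times> real \<Rightarrow> real) set). ineqD R s 1 C u)"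
proof
  assume H: "\<forall>u\<in>(Cc_inf R :: ((real^'m) \<times> real \<Rightarrow> real) set). ineqD R s 1 C u"
  obtain M where M0: "M \<ge> 0" and M: "\<And>t. Hd t \<le> M" using Hd_bounded by blast
  define a where "a = R / 2 * exp (1 - exp (3 / C + 1))"
  have a0: "a > 0" unfolding a_def using R by simp
  have e1: "exp (3 / C + 1) \<ge> 1" using C by simp
  have aR: "2 * a \<le> R"
  proof -
    have "exp (1 - exp (3 / C + 1)) \<le> 1" using e1 by simp
    then show ?thesis unfolding a_def using R by simp
  qed
  define A1 where "A1 = integral {a..2 * R - a} (\<lambda>t. psi a R t / dl R t powr s)"
  define B1 where "B1 = integral {a..2 * R - a} (\<lambda>t. psi a R t / dl R t * Xf (dl R t / R) powr 1)"
  define P where "P = integral {a..2 * R - a} (\<lambda>t. psi a R t / dl R t powr (s - 1))"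
  define Q where "Q = integral {a..2 * R - a} (\<lambda>t. \<bar>psid a R t\<bar> / dl R t powr (s - 1))"
  have E: "Q - (s - 1) * A1 = 2 * R powr (1 - s)" unfolding Q_def A1_def by (rule claim1[OF a0 aR])
  have B1ge: "B1 \<ge> 3 / C + 1"
  proof -
    have "2 * a / R = exp (1 - exp (3 / C + 1))" unfolding a_def using R by simp
    then have "ln (1 - ln (2 * a / R)) = 3 / C + 1" by simp
    then show ?thesis using claim2[OF a0 aR] unfolding B1_def by simp
  qed
  have CB1: "C * B1 \<ge> 3"
  proof -
    have "C * B1 \<ge> C * (3 / C + 1)" using B1ge C by (simp add: mult_left_mono)
    also have "C * (3 / C + 1) = 3 + C" using C by (simp add: field_simps)
    finally show ?thesis using C by linarith
  qed
  have P0: "P \<ge> 0" unfolding P_def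
  proof (rule integral_nonneg)
    show "(\<lambda>t. psi a R t / dl R t powr (s - 1)) integrable_on {a..2 * R - a}"
      by (rule integrable_continuous_interval[OF cont_aux(2)[OF a0 aR]])
    fix t assume "t \<in> {a..2 * R - a}"
    then show "0 \<le> psi a R t / dl R t powr (s - 1)" using psi_nonneg'[of a R t] by simp
  qed
  define m where "m = real CARD('m)"
  have m1: "m \<ge> 1" unfolding m_def by simp
  define \<rho> where "\<rho> = (2 * m) ^ CARD('m)"
  have \<rho>0: "\<rho> \<ge> 0" unfolding \<rho>_def using m1 by simp
  define Rp where "Rp = R powr (s - 1)"
  have Rp0: "Rp > 0" unfolding Rp_def using R by simp
  have Rinv: "R powr (1 - s) = 1 / Rp" unfolding Rp_def using powr_minus_divide[of R "s - 1"] by simp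
  define L where "L = 4 * M * P * \<rho> * Rp + 1"
  have L0: "L > 0" unfolding L_def using M0 P0 \<rho>0 Rp0 by (simp add: add_nonneg_pos)
  have uC: "(uu L a R :: (real^'m) \<times> real \<Rightarrow> real) \<in> Cc_inf R" by (rule uu_Cc[OF a0 L0])
  have ineq: "ineqD R s 1 C (uu L a R :: (real^'m) \<times> real \<Rightarrow> real)" using H uC by blast
  define Box1 :: "(real^'m) set" where "Box1 = cbox (- (\<chi> i. 2 * L)) (\<chi> i. 2 * L)"
  define Box0 :: "(real^'m) set" where "Box0 = cbox (- (\<chi> i. L / CARD('m))) (\<chi> i. L / CARD('m))"
  define X where "X = integral Box1 (phi L)"
  define V0 where "V0 = Henstock_Kurzweil_Integration.content Box0"
  define V1 where "V1 = Henstock_Kurzweil_Integration.content Box1"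
  have core: "(4 * M / L) * P * V1 + Q * X \<ge> (s - 1) * (X * A1) + C / Rp * (X * B1)"
    using part2_core[OF R s a0 aR L0 M ineq]
    unfolding A1_def[symmetric] B1_def[symmetric] P_def[symmetric] Q_def[symmetric] X_def Box1_def V1_def Rp_def .
  have V0v: "V0 = (2 * (L / m)) ^ CARD('m)" unfolding V0_def Box0_def m_def
    by (rule content_cube) (use L0 in simp)
  have V1v: "V1 = (2 * (2 * L)) ^ CARD('m)" unfolding V1_def Box1_def
    by (rule content_cube) (use L0 in simp)
  have V0p: "V0 > 0" unfolding V0v using L0 m1 by simp
  have V10: "V1 = \<rho> * V0"
  proof -
    have eq: "2 * (2 * L) = (2 * m) * (2 * (L / m))" using m1 by (simp add: field_simps)
    show ?thesis unfolding V1v V0v \<rho>_def eq by (rule power_mult_distrib)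
  qed
  have XV0: "X \<ge> V0"
  proof -
    have sub: "Box0 \<subseteq> Box1"
    proof
      fix y assume "y \<in> Box0"
      then have "\<forall>i. \<bar>y $ i\<bar> \<le> L / CARD('m)" unfolding Box0_def cube_iff .
      moreover have "L / CARD('m) \<le> 2 * L"
      proof -
        have c1: "real CARD('m) \<ge> 1" by simp
        have "L * 1 \<le> L * (2 * real CARD('m))" by (rule mult_left_mono) (use c1 L0 in linarith)+
        then show ?thesis using c1 by (simp add: divide_le_eq algebra_simps)
      qed
      ultimately show "y \<in> Box1" unfolding Box1_def cube_iff by (meson order_trans)
    qed
    have i0: "phi L integrable_on Box0" unfolding Box0_def by (rule integrable_continuous[OF phi_cont])
    have i1: "phi L integrable_on Box1" unfolding Box1_def by (rule integrable_continuous[OF phi_cont])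
    have "integral Box0 (phi L) \<le> integral Box1 (phi L)"
      by (rule integral_subset_le[OF sub i0 i1]) (simp add: phi_nonneg)
    moreover have "integral Box0 (phi L) = integral Box0 (\<lambda>y. 1)"
      by (rule integral_cong) (use phi_one_box[OF L0] Box0_def in blast)
    moreover have "integral Box0 (\<lambda>y. 1::real) = V0" unfolding V0_def Box0_def by simp
    ultimately show ?thesis unfolding X_def by simp
  qed
  have X0: "X \<ge> 0" using XV0 V0p by simp
  have T1: "(4 * M / L) * P * V1 \<ge> X * (C * B1 - 2) / Rp"
  proof -
    have "Q * X - (s - 1) * (X * A1) = X * (Q - (s - 1) * A1)" by (simp add: algebra_simps)
    also have "\<dots> = X * 2 / Rp" unfolding E Rinv by simp
    finally have q: "Q * X - (s - 1) * (X * A1) = X * 2 / Rp" .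
    have c: "C / Rp * (X * B1) = X * (C * B1) / Rp" by simp
    have "X * (C * B1 - 2) / Rp = X * (C * B1) / Rp - X * 2 / Rp" by (simp add: algebra_simps diff_divide_distrib)
    then show ?thesis by (rule lin_aux[OF core q c])
  qed
  have T2: "X * (C * B1 - 2) / Rp \<ge> V0 / Rp"
  proof -
    have "X * 1 \<le> X * (C * B1 - 2)" by (rule mult_left_mono) (use CB1 X0 in auto)
    then have "V0 \<le> X * (C * B1 - 2)" using XV0 by simp
    then show ?thesis using Rp0 by (simp add: divide_right_mono)
  qed
  have T3: "(4 * M / L) * P * \<rho> * V0 \<ge> V0 / Rp" using T1 T2 V10 by (simp add: mult.assoc)
  have "(4 * M * P * \<rho> * Rp) * V0 \<ge> L * V0"
  proof -
    have "((4 * M / L) * P * \<rho> * V0) * (L * Rp) \<ge> (V0 / Rp) * (L * Rp)"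
      by (rule mult_right_mono[OF T3]) (use L0 Rp0 in simp)
    then show ?thesis using L0 Rp0 by (simp add: field_simps)
  qed
  then have "4 * M * P * \<rho> * Rp \<ge> L" using V0p by simp
  then show False unfolding L_def by simp
qed


theorem theoremD:
  fixes R s \<gamma> :: real
  assumes "R > 0" and "s \<ge> 1"
  shows "(\<gamma> > 1 \<longrightarrow> (\<exists>C\<ge>\<gamma> - 1. \<forall>u\<in>(Cc_inf R :: ((real^'m) \<times> real \<Rightarrow> real) set).
              ineqD R s \<gamma> C u))
       \<and> \<not> (\<exists>C>0. \<forall>u\<in>(Cc_inf R :: ((real^'m) \<times> real \<Rightarrow> real) set). ineqD R s 1 C u)"
proof
  show "\<gamma> > 1 \<longrightarrow> (\<exists>C\<ge>\<gamma> - 1. \<forall>u\<in>(Cc_inf R :: ((real^'m) \<times> real \<Rightarrow> real) set). ineqD R s \<gamma> C u)"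
    using part1[OF assms] by blast
  show "\<not> (\<exists>C>0. \<forall>u\<in>(Cc_inf R :: ((real^'m) \<times> real \<Rightarrow> real) set). ineqD R s 1 C u)"
  proof
    assume "\<exists>C>0. \<forall>u\<in>(Cc_inf R :: ((real^'m) \<times> real \<Rightarrow> real) set). ineqD R s 1 C u"
    then obtain C where C: "C > 0" and H: "\<forall>u\<in>(Cc_inf R :: ((real^'m) \<times> real \<Rightarrow> real) set). ineqD R s 1 C u"
      by blast
    show False using part2[OF assms C] H by blast
  qed
qed

end
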